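(* Let $K\ge2$, let $\mathbf{p}$ be a probability vector on $[K]$ with all $p_k>0$, and let $\mathbf{W},\mathbf{W}'$ be $K\times K$ invertible row-stochastic matrices. Then $$\alpha_{f\text{-DIV}}(\mathbf{p},\mathbf{W}\mathbf{W}')\ge\alpha_{f\text{-DIV}}(\mathbf{p},\mathbf{W}),\quad \alpha_{\rm MSE}(\mathbf{p},\mathbf{W}\mathbf{W}')\ge\alpha_{\rm MSE}(\mathbf{p},\mathbf{W}),\quad \alpha_{\rm TV}(\mathbf{p},\mathbf{W}\mathbf{W}')\ge\alpha_{\rm TV}(\mathbf{p},\mathbf{W}),$$ each with equality if and only if $\mathbf{W}'$ is a permutation matrix.
   Context: For a $K\times K$ invertible row-stochastic $\mathbf{V}$: $X_1,\dots,X_n$ i.i.d. with law $\mathbf{p}$, each passed independently through $\mathbf{V}$ ($\Pr\{Y_i=\ell\mid X_i=k\}=V_{k,\ell}$), giving $\mathbf{y}_n$ with empirical distribution $\mathbf{t}(\mathbf{y}_n)$; $\hat{\mathbf{p}}_n=\mathrm{Proj}_{\mathbb{P}}(\mathbf{t}(\mathbf{y}_n)\mathbf{V}^{-1})$, where $\mathrm{Proj}_{\mathbb{P}}$ is a fixed map from vectors with entries summing to one into the probability simplex $\mathbb{P}$ with $\mathrm{Proj}_{\mathbb{P}}(\mathbf{v})=\mathbf{v}$ for $\mathbf{v}\in\mathbb{P}$. Losses: $\mathscr{L}^{(n)}_{f\text{-DIV}}(\mathbf{p},\mathbf{V})=\mathbb{E}[\sum_kp_kf(\hat p_{n,k}/p_k)]$,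 $\mathscr{L}^{(n)}_{\rm MSE}(\mathbf{p},\mathbf{V})=\mathbb{E}\Vert\hat{\mathbf{p}}_n-\mathbf{p}\Vert_2^2$, $\mathscr{L}^{(n)}_{\rm TV}(\mathbf{p},\mathbf{V})=\mathbb{E}\Vert\hat{\mathbf{p}}_n-\mathbf{p}\Vert_1$. Normalized asymptotic losses: $\alpha_{f\text{-DIV}}(\mathbf{p},\mathbf{V})=\lim_n\mathscr{L}^{(n)}_{f\text{-DIV}}(\mathbf{p},\mathbf{V})/\mathscr{L}^{(n)}_{f\text{-DIV}}(\mathbf{p},\mathbf{I})$, $\alpha_{\rm MSE}(\mathbf{p},\mathbf{V})=\lim_n\mathscr{L}^{(n)}_{\rm MSE}(\mathbf{p},\mathbf{V})/\mathscr{L}^{(n)}_{\rm MSE}(\mathbf{p},\mathbf{I})$, $\alpha_{\rm TV}(\mathbf{p},\mathbf{V})=\lim_n\big(\mathscr{L}^{(n)}_{\rm TV}(\mathbf{p},\mathbf{V})/\mathscr{L}^{(n)}_{\rm TV}(\mathbf{p},\mathbf{I})\big)^2$, with $\mathbf{I}$ the identity matrix. The function $f$ is convex on $[0,\infty)$ with $f(1)=0$, $f(0)$ finite, four times differentiable at $1$ with $f(x)=\sum_{\rho=1}^4\frac{f^{(\rho)}(1)}{\rho!}(x-1)^\rho+O(|x-1|^{4+\gamma})$ as $x\to1$ for some $\gamma>0$, $f''(1)>0$, and strictly convex at $1$ (i.e. $f(\lambda(1-\epsilon)+(1-\lambda)(1+\epsilon'))<\lambda f(1-\epsilon)+(1-\lambda)f(1+\epsilon')$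 for all $\epsilon,\epsilon'>0$, $\lambda\in(0,1)$). *)

theory Defs
  imports "HOL-Analysis.Analysis" "HOL-Library.Landau_Symbols"
begin

text \<open>Index set [K] is the finite type 'k; vectors are real^'k (row vectors),
  matrices real^'k^'k with entry V$k$l; row vector times matrix is v*.\<close>

definition prob_vec :: "real^'k::finite \<Rightarrow> bool" where
  "prob_vec v \<longleftrightarrow> (\<forall>k. 0 \<le> v$k) \<and> sum (\<lambda>k. v$k) UNIV = 1"

definition row_stochastic :: "real^'k::finite^'k \<Rightarrow> bool" where
  "row_stochastic V \<longleftrightarrow> (\<forall>k l. 0 \<le> V$k$l) \<and> (\<forall>k. sum (\<lambda>l. V$k$l) UNIV = 1)"

definition permutation_matrix :: "real^'k::finite^'k \<Rightarrow> bool" where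
  "permutation_matrix V \<longleftrightarrow>
     (\<exists>\<sigma>. \<sigma> permutes (UNIV::'k set) \<and> V = (\<chi> i j. if \<sigma> i = j then 1 else 0))"

definition valid_proj :: "(real^'k::finite \<Rightarrow> real^'k) \<Rightarrow> bool" where
  "valid_proj Proj \<longleftrightarrow>
     (\<forall>v. sum (\<lambda>k. v$k) UNIV = 1 \<longrightarrow> prob_vec (Proj v)) \<and>
     (\<forall>v. prob_vec v \<longrightarrow> Proj v = v)"

definition emp_dist :: "'k::finite list \<Rightarrow> real^'k" where
  "emp_dist ys = (\<chi> l. real (length (filter (\<lambda>y. y = l) ys)) / real (length ys))"

definition seq_prob :: "real^'k::finite \<Rightarrow> 'k list \<Rightarrow> real" where
  "seq_prob q ys = prod_list (map (\<lambda>y. q$y) ys)"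

definition p_hat :: "(real^'k::finite \<Rightarrow> real^'k) \<Rightarrow> real^'k^'k \<Rightarrow> 'k list \<Rightarrow> real^'k" where
  "p_hat Proj V ys = Proj (emp_dist ys v* matrix_inv V)"

definition expected_loss ::
  "(real^'k::finite \<Rightarrow> real^'k) \<Rightarrow> real^'k \<Rightarrow> real^'k^'k \<Rightarrow> nat \<Rightarrow> (real^'k \<Rightarrow> real) \<Rightarrow> real" where
  "expected_loss Proj p V n g =
     (\<Sum>ys\<in>{ys. set ys \<subseteq> UNIV \<and> length ys = n}. seq_prob (p v* V) ys * g (p_hat Proj V ys))"

definition loss_fdiv where
  "loss_fdiv f Proj p V n = expected_loss Proj p V n (\<lambda>ph. \<Sum>k\<in>UNIV. p$k * f (ph$k / p$k))"

definition loss_mse where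
  "loss_mse Proj p V n = expected_loss Proj p V n (\<lambda>ph. \<Sum>k\<in>UNIV. (ph$k - p$k)^2)"

definition loss_tv where
  "loss_tv Proj p V n = expected_loss Proj p V n (\<lambda>ph. \<Sum>k\<in>UNIV. \<bar>ph$k - p$k\<bar>)"

definition alpha_fdiv where
  "alpha_fdiv f Proj p V = lim (\<lambda>n. loss_fdiv f Proj p V n / loss_fdiv f Proj p (mat 1) n)"

definition alpha_mse where
  "alpha_mse Proj p V = lim (\<lambda>n. loss_mse Proj p V n / loss_mse Proj p (mat 1) n)"

definition alpha_tv where
  "alpha_tv Proj p V = lim (\<lambda>n. (loss_tv Proj p V n / loss_tv Proj p (mat 1) n)^2)"

definition admissible_f :: "(real \<Rightarrow> real) \<Rightarrow> bool" where
  "admissible_f f \<longleftrightarrow>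
     convex_on {0..} f \<and> f 1 = 0 \<and>
     (\<forall>\<rho><3. eventually (\<lambda>x. (deriv ^^ \<rho>) f differentiable (at x)) (nhds 1)) \<and>
     (deriv ^^ 3) f differentiable (at 1) \<and>
     (\<exists>\<gamma>>0. (\<lambda>x. f x - (\<Sum>\<rho>=1..4. (deriv ^^ \<rho>) f 1 / fact \<rho> * (x - 1) ^ \<rho>))
                \<in> O[at 1](\<lambda>x. \<bar>x - 1\<bar> powr (4 + \<gamma>))) \<and>
     (deriv ^^ 2) f 1 > 0 \<and>
     (\<forall>\<epsilon> \<epsilon>' t. 0 < \<epsilon> \<and> \<epsilon> \<le> 1 \<and> 0 < \<epsilon>' \<and> 0 < t \<and> t < 1 \<longrightarrow>
        f (t * (1 - \<epsilon>) + (1 - t) * (1 + \<epsilon>')) < t * f (1 - \<epsilon>) + (1 - t) * f (1 + \<epsilon>'))"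

end

theory Submission
  imports Defs "HOL-Probability.Probability" "HOL-Real_Asymp.Real_Asymp"
begin


definition lsum :: "real^'k::finite \<Rightarrow> nat \<Rightarrow> ('k list \<Rightarrow> real) \<Rightarrow> real" where
  "lsum q n F = (\<Sum>ys\<in>{ys. set ys \<subseteq> UNIV \<and> length ys = n}. seq_prob q ys * F ys)"

lemma lsum_0[simp]: "lsum q 0 F = F []"
  by (simp add: lsum_def seq_prob_def)

lemma lists_Suc_eq: "{ys::'a list. set ys \<subseteq> UNIV \<and> length ys = Suc n} =
   (\<lambda>(y,ys). y#ys) ` (UNIV \<times> {ys. set ys \<subseteq> UNIV \<and> length ys = n})"
  by (auto simp: image_iff length_Suc_conv)

lemma lsum_Suc: "lsum (q::real^'k::finite) (Suc n) F = (\<Sum>y\<in>UNIV. q$y * lsum q n (\<lambda>ys. F (y#ys)))"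
proof -
  have inj: "inj_on (\<lambda>(y,ys). y#ys) (UNIV \<times> {ys::'k list. set ys \<subseteq> UNIV \<and> length ys = n})"
    by (auto simp: inj_on_def)
  have "lsum q (Suc n) F = (\<Sum>(y,ys)\<in>UNIV \<times> {ys::'k list. set ys \<subseteq> UNIV \<and> length ys = n}. seq_prob q (y#ys) * F (y#ys))"
    unfolding lsum_def lists_Suc_eq by (subst sum.reindex[OF inj]) (simp add: case_prod_beta)
  also have "\<dots> = (\<Sum>y\<in>UNIV. \<Sum>ys\<in>{ys::'k list. set ys \<subseteq> UNIV \<and> length ys = n}. seq_prob q (y#ys) * F (y#ys))"
    by (rule sum.cartesian_product[symmetric])
  also have "\<dots> = (\<Sum>y\<in>UNIV. q$y * lsum q n (\<lambda>ys. F (y#ys)))"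
    by (simp add: lsum_def seq_prob_def sum_distrib_left mult.assoc)
  finally show ?thesis .
qed

lemma lsum_add: "lsum q n (\<lambda>ys. F ys + G ys) = lsum q n F + lsum q n G"
  by (simp add: lsum_def distrib_left sum.distrib)
lemma lsum_diff: "lsum q n (\<lambda>ys. F ys - G ys) = lsum q n F - lsum q n G"
  by (simp add: lsum_def right_diff_distrib sum_subtractf)
lemma lsum_cmult: "lsum q n (\<lambda>ys. c * F ys) = c * lsum q n F"
  by (simp add: lsum_def sum_distrib_left mult.left_commute)
lemma lsum_multc: "lsum q n (\<lambda>ys. F ys * c) = lsum q n F * c"
  by (simp add: lsum_def sum_distrib_right mult.assoc)
lemma lsum_divc: "lsum q n (\<lambda>ys. F ys / c) = lsum q n F / c"
  by (simp add: lsum_def sum_divide_distrib)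
lemma lsum_sum: "finite A \<Longrightarrow> lsum q n (\<lambda>ys. \<Sum>k\<in>A. F k ys) = (\<Sum>k\<in>A. lsum q n (F k))"
  by (induction A rule: finite_induct) (auto simp: lsum_add lsum_def)

lemma seq_prob_nonneg: "(\<forall>y. 0 \<le> (q::real^'k::finite)$y) \<Longrightarrow> 0 \<le> seq_prob q ys"
  by (induction ys) (auto simp: seq_prob_def)

lemma lsum_mono: "(\<forall>y. 0 \<le> q$y) \<Longrightarrow> (\<And>ys. length ys = n \<Longrightarrow> F ys \<le> G ys) \<Longrightarrow> lsum q n F \<le> lsum q n G"
  unfolding lsum_def by (intro sum_mono mult_left_mono) (auto simp: seq_prob_nonneg)

lemma lsum_const: "sum (\<lambda>y. q$y) UNIV = 1 \<Longrightarrow> lsum (q::real^'k::finite) n (\<lambda>_. c) = c"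
  by (induction n) (auto simp: lsum_Suc sum_distrib_right[symmetric])

lemma lsum_cong: "(\<And>ys. length ys = n \<Longrightarrow> F ys = G ys) \<Longrightarrow> lsum q n F = lsum q n G"
  unfolding lsum_def by (intro sum.cong) auto

lemma lsum_abs: "(\<forall>y. 0 \<le> q$y) \<Longrightarrow> \<bar>lsum q n F\<bar> \<le> lsum q n (\<lambda>ys. \<bar>F ys\<bar>)"
  unfolding lsum_def
  by (rule order_trans[OF sum_abs]) (auto simp: abs_mult seq_prob_nonneg intro!: sum_mono)


definition Sh :: "('k \<Rightarrow> real) \<Rightarrow> 'k list \<Rightarrow> real" where
  "Sh h ys = sum_list (map h ys)"

lemma Sh_Nil[simp]: "Sh h [] = 0" and Sh_Cons[simp]: "Sh h (y#ys) = h y + Sh h ys"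
  by (simp_all add: Sh_def)

locale centered =
  fixes q :: "real^'k::finite" and h :: "'k \<Rightarrow> real"
  assumes q_nonneg: "\<forall>y. 0 \<le> q$y" and q_sum: "sum (\<lambda>y. q$y) UNIV = 1"
    and h_mean: "(\<Sum>y\<in>UNIV. q$y * h y) = 0"
begin

definition "v = (\<Sum>y\<in>UNIV. q$y * (h y)^2)"
definition "m4 = (\<Sum>y\<in>UNIV. q$y * (h y)^4)"

lemma v_nonneg: "0 \<le> v" unfolding v_def using q_nonneg by (intro sum_nonneg) auto
lemma m4_nonneg: "0 \<le> m4" unfolding m4_def using q_nonneg by (intro sum_nonneg) auto

lemma E1: "lsum q n (\<lambda>ys. Sh h ys) = 0"
proof (induction n)
  case (Suc n)
  have "lsum q (Suc n) (\<lambda>ys. Sh h ys) = (\<Sum>y\<in>UNIV. q$y * (h y + lsum q n (Sh h)))"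
    by (simp add: lsum_Suc lsum_add lsum_const q_sum)
  also have "\<dots> = 0" using Suc h_mean by simp
  finally show ?case .
qed simp

lemma E2: "lsum q n (\<lambda>ys. (Sh h ys)^2) = n * v"
proof (induction n)
  case (Suc n)
  have "lsum q (Suc n) (\<lambda>ys. (Sh h ys)^2) =
     (\<Sum>y\<in>UNIV. q$y * lsum q n (\<lambda>ys. (h y)^2 + 2 * h y * Sh h ys + (Sh h ys)^2))"
    by (simp add: lsum_Suc power2_sum ac_simps)
  also have "\<dots> = (\<Sum>y\<in>UNIV. q$y * (h y)^2 + q$y * (n * v))"
    by (simp add: lsum_add lsum_cmult lsum_const q_sum E1 Suc distrib_left)
  also have "\<dots> = Suc n * v"
    by (simp add: sum.distrib sum_distrib_right[symmetric] q_sum v_def[symmetric] flip: sum_distrib_left)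
       (simp add: algebra_simps)
  finally show ?case .
qed simp

lemma E4: "lsum q n (\<lambda>ys. (Sh h ys)^4) = n * m4 + 3 * n * (n - 1) * v^2"
proof (induction n)
  case (Suc n)
  have e: "(a + b)^4 = a^4 + 4*a^3*b + 6*a^2*b^2 + 4*a*b^3 + b^4" for a b :: real
    by algebra
  have "lsum q (Suc n) (\<lambda>ys. (Sh h ys)^4) =
     (\<Sum>y\<in>UNIV. q$y * lsum q n (\<lambda>ys. (h y)^4 + 4*(h y)^3 * Sh h ys + 6*(h y)^2 * (Sh h ys)^2
        + 4 * h y * (Sh h ys)^3 + (Sh h ys)^4))"
    by (simp add: lsum_Suc e)
  also have "\<dots> = (\<Sum>y\<in>UNIV. q$y * (h y)^4 + (q$y * (h y)^2) * (6 * (real n * v))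
      + (q$y * h y) * (4 * lsum q n (\<lambda>ys. (Sh h ys)^3)) + q$y * (real n * m4 + 3 * real n * (real n - 1) * v^2))"
    by (simp add: lsum_add lsum_cmult lsum_multc lsum_const q_sum E1 E2 Suc algebra_simps)
  also have "\<dots> = m4 + v * (6 * (n * v)) + 0 + (n * m4 + 3 * n * (real n - 1) * v^2)"
    using m4_def v_def by (simp add: sum.distrib sum_distrib_right[symmetric] q_sum h_mean)
  also have "\<dots> = real (Suc n) * m4 + 3 * real (Suc n) * (real (Suc n) - 1) * v^2"
    by (cases n) (simp_all add: algebra_simps power2_eq_square)
  finally show ?case .
qed simp

lemma E4_le: "lsum q n (\<lambda>ys. (Sh h ys)^4) \<le> (m4 + 3 * v^2) * (real n)^2"
proof -
  have a: "real n * m4 \<le> (real n)^2 * m4" using m4_nonneg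
    by (intro mult_right_mono) (cases n, auto simp: power2_eq_square)
  have "real n * (real n - 1) \<le> real n * real n" by (intro mult_left_mono) auto
  then have b: "3 * real n * (real n - 1) * v^2 \<le> 3 * (real n)^2 * v^2"
    using v_nonneg by (simp add: power2_eq_square mult_right_mono mult.assoc mult_left_mono)
  show ?thesis unfolding E4 using a b by (simp add: algebra_simps)
qed

end


lemma inv_lr:
  fixes A :: "real^'n^'n"
  assumes "invertible A"
  shows "A ** matrix_inv A = mat 1" "matrix_inv A ** A = mat 1"
proof -
  have "A ** matrix_inv A = mat 1 \<and> matrix_inv A ** A = mat 1"
    using assms unfolding invertible_def matrix_inv_def by (rule someI_ex)
  then show "A ** matrix_inv A = mat 1" "matrix_inv A ** A = mat 1" by auto
qed

lemma matrix_inv_unique: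
  fixes A C :: "real^'n^'n"
  assumes "invertible A" "C ** A = mat 1"
  shows "matrix_inv A = C"
proof -
  have "matrix_inv A = (C ** A) ** matrix_inv A" using assms by simp
  also have "\<dots> = C" by (simp add: matrix_mul_assoc[symmetric] inv_lr[OF assms(1)])
  finally show ?thesis .
qed

lemma matrix_inv_mult:
  fixes A B :: "real^'n^'n"
  assumes "invertible A" "invertible B"
  shows "matrix_inv (A ** B) = matrix_inv B ** matrix_inv A"
proof (rule matrix_inv_unique)
  show "invertible (A ** B)" using assms by (rule invertible_mult)
  have "matrix_inv B ** matrix_inv A ** (A ** B) = matrix_inv B ** (matrix_inv A ** A) ** B"
    by (simp add: matrix_mul_assoc)
  also have "\<dots> = mat 1" using inv_lr[OF assms(1)] inv_lr[OF assms(2)] by simp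
  finally show "matrix_inv B ** matrix_inv A ** (A ** B) = mat 1" .
qed

lemma invertible_matrix_inv:
  fixes A :: "real^'n^'n"
  assumes "invertible A" shows "invertible (matrix_inv A)"
  using inv_lr[OF assms] unfolding invertible_def by blast

lemma rs_ones: "row_stochastic V \<Longrightarrow> V *v (vec 1) = (vec 1 :: real^'k::finite)"
  by (simp add: row_stochastic_def matrix_vector_mult_def vec_eq_iff)

lemma inv_row_sum:
  fixes V :: "real^'k::finite^'k"
  assumes "row_stochastic V" "invertible V"
  shows "(\<Sum>l\<in>UNIV. matrix_inv V $ k $ l) = 1"
proof -
  have "matrix_inv V *v vec 1 = matrix_inv V *v (V *v vec 1)" using rs_ones[OF assms(1)] by simp
  also have "\<dots> = vec 1" by (simp add: matrix_vector_mul_assoc inv_lr[OF assms(2)])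
  finally have "(matrix_inv V *v vec 1) $ k = (vec 1 :: real^'k) $ k" by simp
  then show ?thesis by (simp add: matrix_vector_mult_def)
qed

lemma rows_inj:
  fixes A :: "real^'k::finite^'k"
  assumes "invertible A" "\<forall>k. A$l$k = A$l'$k"
  shows "l = l'"
proof -
  have r: "A$l = A$l'" using assms(2) by (simp add: vec_eq_iff)
  have "(A ** matrix_inv A)$l = (A ** matrix_inv A)$l'"
    using r by (simp add: matrix_matrix_mult_def vec_eq_iff)
  then have "(mat 1 :: real^'k^'k)$l$l = (mat 1 :: real^'k^'k)$l'$l"
    by (simp add: inv_lr[OF assms(1)])
  then show ?thesis by (simp add: mat_def split: if_splits)
qed

lemma qV_pos:
  fixes V :: "real^'k::finite^'k" and p :: "real^'k"
  assumes "row_stochastic V" "invertible V" "\<forall>k. p$k > 0"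
  shows "(p v* V)$l > 0"
proof (rule ccontr)
  assume "\<not> (p v* V)$l > 0"
  moreover have "(p v* V)$l = (\<Sum>k\<in>UNIV. p$k * V$k$l)" by (simp add: vector_matrix_mult_def)
  moreover have nn: "\<forall>k\<in>UNIV. 0 \<le> p$k * V$k$l" using assms(1,3) unfolding row_stochastic_def
    by (simp add: less_imp_le)
  ultimately have "(\<Sum>k\<in>UNIV. p$k * V$k$l) = 0" using sum_nonneg[of UNIV "\<lambda>k. p$k * V$k$l"] by auto
  then have "\<forall>k. p$k * V$k$l = 0" using nn by (simp add: sum_nonneg_eq_0_iff)
  then have z: "\<forall>k. V$k$l = 0" using assms(3) by (metis less_irrefl mult_eq_0_iff)
  define e :: "real^'k" where "e = axis l 1"
  have "V *v e = 0" using z by (simp add: e_def matrix_vector_mult_def vec_eq_iff axis_def if_distrib cong: if_cong)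
  then have "matrix_inv V *v (V *v e) = 0" by simp
  then have "e = 0" by (simp add: matrix_vector_mul_assoc inv_lr[OF assms(2)])
  then show False by (simp add: e_def axis_eq_0_iff)
qed

lemma qV_sum:
  fixes V :: "real^'k::finite^'k" and p :: "real^'k"
  assumes "row_stochastic V" "prob_vec p"
  shows "(\<Sum>l\<in>UNIV. (p v* V)$l) = 1"
proof -
  have "(\<Sum>l\<in>UNIV. (p v* V)$l) = (\<Sum>k\<in>UNIV. p$k * (\<Sum>l\<in>UNIV. V$k$l))"
    by (simp add: vector_matrix_mult_def sum_distrib_left) (rule sum.swap)
  also have "\<dots> = 1" using assms by (simp add: row_stochastic_def prob_vec_def)
  finally show ?thesis .
qed

lemma qV_M:
  fixes V :: "real^'k::finite^'k" and p :: "real^'k"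
  assumes "invertible V"
  shows "(\<Sum>y\<in>UNIV. (p v* V)$y * matrix_inv V $ y $ k) = p$k"
proof -
  have "(p v* V) v* matrix_inv V = p" by (simp add: vector_matrix_mul_assoc inv_lr[OF assms])
  then show ?thesis by (simp add: vector_matrix_mult_def vec_eq_iff)
qed

definition hk :: "real^'k::finite \<Rightarrow> real^'k^'k \<Rightarrow> 'k \<Rightarrow> 'k \<Rightarrow> real" where
  "hk p V k y = matrix_inv V $ y $ k - p$k"

definition varV :: "real^'k::finite \<Rightarrow> real^'k^'k \<Rightarrow> 'k \<Rightarrow> real" where
  "varV p V k = (\<Sum>y\<in>UNIV. (p v* V)$y * (hk p V k y)^2)"

lemma centered_hk:
  fixes V :: "real^'k::finite^'k" and p :: "real^'k"
  assumes "row_stochastic V" "invertible V" "prob_vec p" "\<forall>k. p$k > 0"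
  shows "centered (p v* V) (hk p V k)"
proof
  show "\<forall>y. 0 \<le> (p v* V)$y" using qV_pos[OF assms(1,2,4)] by (simp add: less_imp_le)
  show "(\<Sum>y\<in>UNIV. (p v* V)$y) = 1" by (rule qV_sum[OF assms(1,3)])
  show "(\<Sum>y\<in>UNIV. (p v* V)$y * hk p V k y) = 0"
    using qV_M[OF assms(2), of p k] qV_sum[OF assms(1,3)]
    by (simp add: hk_def right_diff_distrib sum_subtractf sum_distrib_right[symmetric])
qed

lemma varV_eq: "centered (p v* V) (hk p V k) \<Longrightarrow> centered.v (p v* V) (hk p V k) = varV p V k"
  by (simp add: centered.v_def varV_def)

lemma sum_list_ones: "sum_list (map (\<lambda>_. 1::real) ys) = length ys"
  by (induction ys) auto

lemma count_sum: "(\<Sum>l\<in>(UNIV::'k::finite set). real (length (filter (\<lambda>y. y = l) ys)) * c l) = sum_list (map c ys)"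
proof (induction ys)
  case (Cons a ys)
  have "(\<Sum>l\<in>UNIV. real (length (filter (\<lambda>y. y = l) (a#ys))) * c l)
     = (\<Sum>l\<in>UNIV. (if l = a then c l else 0) + real (length (filter (\<lambda>y. y = l) ys)) * c l)"
    by (intro sum.cong) (auto simp: algebra_simps)
  also have "\<dots> = c a + sum_list (map c ys)" using Cons by (simp only: sum.distrib sum.delta finite_UNIV) simp
  finally show ?case by simp
qed simp

lemma sum_list_M: "sum_list (map (\<lambda>y. matrix_inv V $ y $ k) ys) = Sh (hk p V k) ys + length ys * p$k"
  by (induction ys) (auto simp: hk_def algebra_simps)

lemma emp_M:
  fixes V :: "real^'k::finite^'k" and p :: "real^'k"
  assumes "length ys = n" "n > 0"
  shows "(emp_dist ys v* matrix_inv V)$k = p$k + Sh (hk p V k) ys / n"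
proof -
  have "(emp_dist ys v* matrix_inv V)$k = (\<Sum>l\<in>UNIV. real (length (filter (\<lambda>y. y = l) ys)) * matrix_inv V $ l $ k) / n"
    using assms by (simp add: emp_dist_def vector_matrix_mult_def sum_divide_distrib)
  also have "\<dots> = p$k + Sh (hk p V k) ys / n"
  proof -
    have c: "(\<Sum>l\<in>UNIV. real (length (filter (\<lambda>y. y = l) ys)) * matrix_inv V $ l $ k) = Sh (hk p V k) ys + n * p$k"
      using count_sum[of ys "\<lambda>l. matrix_inv V $ l $ k"] sum_list_M[of V k ys p] assms(1) by simp
    show ?thesis unfolding c using assms by (simp add: field_simps)
  qed
  finally show ?thesis .
qed

lemma emp_M_sum:
  fixes V :: "real^'k::finite^'k" and p :: "real^'k"
  assumes "length ys = n" "n > 0" "row_stochastic V" "invertible V"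
  shows "(\<Sum>k\<in>UNIV. (emp_dist ys v* matrix_inv V)$k) = 1"
proof -
  have "(\<Sum>k\<in>UNIV. (emp_dist ys v* matrix_inv V)$k) = (\<Sum>l\<in>UNIV. emp_dist ys $ l * (\<Sum>k\<in>UNIV. matrix_inv V $ l $ k))"
    by (simp add: vector_matrix_mult_def sum_distrib_left) (rule sum.swap)
  also have "\<dots> = (\<Sum>l\<in>UNIV. emp_dist ys $ l)" using inv_row_sum[OF assms(3,4)] by simp
  also have "\<dots> = (\<Sum>l\<in>UNIV. real (length (filter (\<lambda>y. y = l) ys)) * 1) / n"
    using assms by (simp add: emp_dist_def sum_divide_distrib)
  also have "\<dots> = 1" using assms by (simp only: count_sum) (simp add: sum_list_ones)
  finally show ?thesis .
qed


context centered begin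

definition "Q = embed_pmf (\<lambda>y. q$y)"

lemma pmf_Q: "pmf Q y = q$y"
proof -
  have "(\<integral>\<^sup>+x. ennreal (q$x) \<partial>count_space UNIV) = 1"
    using q_nonneg q_sum by (subst nn_integral_count_space_finite) (auto simp: sum_ennreal)
  then show ?thesis unfolding Q_def using q_nonneg by (subst pmf_embed_pmf) auto
qed

abbreviation "SS \<equiv> PiM UNIV (\<lambda>_::nat. measure_pmf Q)"

lemma transfer:
  fixes g :: "real \<Rightarrow> real"
  assumes "\<And>x. \<bar>g x\<bar> \<le> B" "g \<in> borel_measurable borel"
  shows "(\<integral>\<omega>. g (\<Sum>i<n. h (\<omega> i)) \<partial>SS) = lsum q n (\<lambda>ys. g (Sh h ys))"
  using assms
proof (induction n arbitrary: g)
  case 0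
  interpret S: sequence_space "measure_pmf Q" ..
  show ?case by (simp add: S.P.prob_space)
next
  case (Suc n)
  interpret S: sequence_space "measure_pmf Q" ..
  interpret P: pair_sigma_finite "measure_pmf Q" SS ..
  interpret PP: prob_space "measure_pmf Q \<Otimes>\<^sub>M SS"
    by (intro prob_space_pair) (auto simp: S.P.prob_space_axioms prob_space_measure_pmf)
  note [measurable] = Suc.prems(2)
  have "(\<integral>\<omega>. g (\<Sum>i<Suc n. h (\<omega> i)) \<partial>SS) = (\<integral>\<omega>. g (\<Sum>i<Suc n. h (\<omega> i)) \<partial>distr (measure_pmf Q \<Otimes>\<^sub>M SS) SS (\<lambda>(s, \<omega>). case_nat s \<omega>))"
    by (simp add: S.PiM_iter)
  also have "\<dots> = (\<integral>z. g (\<Sum>i<Suc n. h (case_nat (fst z) (snd z) i)) \<partial>(measure_pmf Q \<Otimes>\<^sub>M SS))"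
    by (subst integral_distr) (auto simp: split_beta')
  also have "\<dots> = (\<integral>z. g (h (fst z) + (\<Sum>i<n. h (snd z i))) \<partial>(measure_pmf Q \<Otimes>\<^sub>M SS))"
    by (simp only: sum.lessThan_Suc_shift nat.case)
  also have "\<dots> = (\<integral>s. (\<integral>\<omega>. g (h s + (\<Sum>i<n. h (\<omega> i))) \<partial>SS) \<partial>measure_pmf Q)"
  proof (subst P.integral_fst'[symmetric])
    show "integrable (measure_pmf Q \<Otimes>\<^sub>M SS) (\<lambda>z. g (h (fst z) + (\<Sum>i<n. h (snd z i))))"
      using Suc.prems(1) by (intro PP.integrable_const_bound[where B=B]) auto
  qed (simp add: split_beta')
  also have "\<dots> = (\<Sum>y\<in>UNIV. (\<integral>\<omega>. g (h y + (\<Sum>i<n. h (\<omega> i))) \<partial>SS) * pmf Q y)"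
    by (rule integral_measure_pmf_real) auto
  also have "\<dots> = (\<Sum>y\<in>UNIV. q$y * lsum q n (\<lambda>ys. g (h y + Sh h ys)))"
  proof (intro sum.cong refl)
    fix y
    have "(\<integral>\<omega>. g (h y + (\<Sum>i<n. h (\<omega> i))) \<partial>SS) = lsum q n (\<lambda>ys. g (h y + Sh h ys))"
      using Suc.prems by (intro Suc.IH[of "\<lambda>x. g (h y + x)"]) auto
    then show "(\<integral>\<omega>. g (h y + (\<Sum>i<n. h (\<omega> i))) \<partial>SS) * pmf Q y = q$y * lsum q n (\<lambda>ys. g (h y + Sh h ys))"
      by (simp add: pmf_Q)
  qed
  also have "\<dots> = lsum q (Suc n) (\<lambda>ys. g (Sh h ys))"
    by (simp add: lsum_Suc)
  finally show ?case .
qed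


lemma coord_integral:
  fixes F :: "'k \<Rightarrow> real"
  shows "integrable SS (\<lambda>\<omega>. F (\<omega> i))" "(\<integral>\<omega>. F (\<omega> i) \<partial>SS) = (\<Sum>y\<in>UNIV. q$y * F y)"
proof -
  interpret S: sequence_space "measure_pmf Q" ..
  have d: "distr SS (measure_pmf Q) (\<lambda>\<omega>. \<omega> i) = measure_pmf Q" by (simp add: S.PiM_component)
  have "integrable (distr SS (measure_pmf Q) (\<lambda>\<omega>. \<omega> i)) F"
    unfolding d by (rule integrable_measure_pmf_finite) simp
  then show "integrable SS (\<lambda>\<omega>. F (\<omega> i))"
    by (subst (asm) integrable_distr_eq) auto
  have "(\<integral>\<omega>. F (\<omega> i) \<partial>SS) = (\<integral>y. F y \<partial>distr SS (measure_pmf Q) (\<lambda>\<omega>. \<omega> i))"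
    by (subst integral_distr) auto
  also have "\<dots> = (\<Sum>y\<in>UNIV. q$y * F y)"
    unfolding d by (subst integral_measure_pmf_real[of UNIV]) (auto simp: pmf_Q mult.commute)
  finally show "(\<integral>\<omega>. F (\<omega> i) \<partial>SS) = (\<Sum>y\<in>UNIV. q$y * F y)" .
qed

lemma clt_weak:
  assumes "v > 0"
  shows "weak_conv_m (\<lambda>n. distr SS borel (\<lambda>\<omega>. (\<Sum>i<n. h (\<omega> i)) / sqrt (n * (sqrt v)\<^sup>2))) std_normal_distribution"
proof -
  interpret S: sequence_space "measure_pmf Q" ..
  have ind0: "S.P.indep_vars (\<lambda>_. measure_pmf Q) (\<lambda>i \<omega>. \<omega> i) UNIV"
    by (subst S.P.indep_vars_iff_distr_eq_PiM) (auto simp: S.PiM_component restrict_UNIV distr_id2)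
  have ind: "S.P.indep_vars (\<lambda>_. borel) (\<lambda>i \<omega>. h (\<omega> i)) UNIV"
    by (rule S.P.indep_vars_compose2[OF ind0]) auto
  show ?thesis
  proof (rule S.P.central_limit_theorem_zero_mean[OF ind])
    show "S.P.expectation (\<lambda>\<omega>. h (\<omega> n)) = 0" for n
      using coord_integral(2)[of h n] h_mean by simp
    show "0 < sqrt v" using assms by simp
    show "integrable SS (\<lambda>\<omega>. (h (\<omega> n))\<^sup>2)" for n
      by (rule coord_integral(1)[of "\<lambda>y. (h y)^2"])
    show "S.P.variance (\<lambda>\<omega>. h (\<omega> n)) = (sqrt v)\<^sup>2" for n
      using coord_integral(2)[of h n] h_mean coord_integral(2)[of "\<lambda>y. (h y)^2" n] assms
      by (simp add: v_def)
    show "distr SS borel (\<lambda>\<omega>. h (\<omega> n)) = distr SS borel (\<lambda>\<omega>. h (\<omega> 0))" for n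
    proof -
      have "distr SS borel (\<lambda>\<omega>. h (\<omega> i)) = distr (measure_pmf Q) borel h" for i
      proof -
        have "distr SS borel (\<lambda>\<omega>. h (\<omega> i)) = distr (distr SS (measure_pmf Q) (\<lambda>\<omega>. \<omega> i)) borel h"
          by (subst distr_distr) (auto simp: comp_def)
        also have "\<dots> = distr (measure_pmf Q) borel h" by (simp add: S.PiM_component)
        finally show ?thesis .
      qed
      then show ?thesis by simp
    qed
  qed
qed


lemma tail_bound: "B > 0 \<Longrightarrow> \<bar>x\<bar> - min \<bar>x\<bar> B \<le> x^2 / B" for x B :: real
proof (cases "\<bar>x\<bar> \<le> B")
  case False
  assume "B > 0"
  then have "\<bar>x\<bar> * B \<le> \<bar>x\<bar> * \<bar>x\<bar>" using False by (intro mult_left_mono) auto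
  then have "\<bar>x\<bar> \<le> x^2 / B" using \<open>B > 0\<close> by (simp add: field_simps power2_eq_square)
  moreover have "\<bar>x\<bar> - min \<bar>x\<bar> B = \<bar>x\<bar> - B" using False by simp
  ultimately show ?thesis using \<open>B > 0\<close> by linarith
qed simp

lemma clt_abs:
  assumes "v > 0"
  shows "(\<lambda>n. lsum q n (\<lambda>ys. \<bar>Sh h ys\<bar>) / sqrt n) \<longlonglongrightarrow> sqrt (2/pi) * sqrt v"
proof -
  interpret S: sequence_space "measure_pmf Q" ..
  define \<mu> where "\<mu> n = distr SS borel (\<lambda>\<omega>. (\<Sum>i<n. h (\<omega> i)) / sqrt (n * (sqrt v)\<^sup>2))" for n
  define N where "N = std_normal_distribution"
  define c where "c = sqrt (2/pi)"
  define a where "a n = lsum q n (\<lambda>ys. \<bar>Sh h ys / sqrt (n * v)\<bar>)" for n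
  have wc: "weak_conv_m \<mu> N" unfolding \<mu>_def N_def by (rule clt_weak[OF assms])
  have rd: "real_distribution (\<mu> n)" for n unfolding \<mu>_def by (rule S.P.real_distribution_distr) simp
  have rdN: "real_distribution N" unfolding N_def by (rule real_dist_normal_dist)
  have vv: "(sqrt v)\<^sup>2 = v" using assms by simp
  have conv: "(\<lambda>n. lsum q n (\<lambda>ys. g (Sh h ys / sqrt (n * v)))) \<longlonglongrightarrow> (\<integral>x. g x \<partial>N)"
    if gB: "\<And>x. \<bar>g x\<bar> \<le> B" and gc: "\<And>x. isCont g x" for g :: "real \<Rightarrow> real" and B
  proof -
    have gm: "g \<in> borel_measurable borel"
      using gc by (intro borel_measurable_continuous_onI continuous_at_imp_continuous_on) auto
    have "(\<lambda>n. integral\<^sup>L (\<mu> n) g) \<longlonglongrightarrow> integral\<^sup>L N g"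
      by (rule weak_conv_imp_integral_bdd_continuous_conv[OF rd rdN wc, of g B]) (use gB gc in auto)
    moreover have "integral\<^sup>L (\<mu> n) g = lsum q n (\<lambda>ys. g (Sh h ys / sqrt (n * v)))" for n
    proof -
      have "integral\<^sup>L (\<mu> n) g = (\<integral>\<omega>. g ((\<Sum>i<n. h (\<omega> i)) / sqrt (n * v)) \<partial>SS)"
        unfolding \<mu>_def vv using gm by (subst integral_distr) auto
      also have "\<dots> = lsum q n (\<lambda>ys. g (Sh h ys / sqrt (n * v)))"
        using gB gm by (intro transfer[of "\<lambda>x. g (x / sqrt (n * v))" B]) auto
      finally show ?thesis .
    qed
    ultimately show ?thesis by simp
  qed
  have Nabs: "(\<integral>x. \<bar>x\<bar> \<partial>N) = c"
    using std_normal_distribution_odd_moments_abs[of 0] unfolding N_def c_def by simp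
  have Nsq: "(\<integral>x. x^2 \<partial>N) = 1"
    using std_normal_distribution_even_moments[of 1] unfolding N_def by simp
  have iabs: "integrable N (\<lambda>x. \<bar>x\<bar>)"
    using integrable_std_normal_distribution_moment[of 1] unfolding N_def by (intro integrable_abs) simp
  have isq: "integrable N (\<lambda>x. x^2)"
    using integrable_std_normal_distribution_moment[of 2] unfolding N_def by simp
  have a_lim: "a \<longlonglongrightarrow> c"
  proof (rule LIMSEQ_I)
    fix r :: real assume r: "r > 0"
    define B where "B = 4 / r"
    have B: "B > 0" using r by (simp add: B_def)
    let ?g = "\<lambda>x::real. min \<bar>x\<bar> B"
    have "(\<lambda>n. lsum q n (\<lambda>ys. ?g (Sh h ys / sqrt (n * v)))) \<longlonglongrightarrow> (\<integral>x. ?g x \<partial>N)"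
      using B by (intro conv[of _ B]) (auto intro!: continuous_intros)
    then have "\<exists>n0. \<forall>n\<ge>n0. norm (lsum q n (\<lambda>ys. ?g (Sh h ys / sqrt (n * v))) - (\<integral>x. ?g x \<partial>N)) < r/3"
      by (rule LIMSEQ_D) (use r in simp)
    then obtain n0 where n0: "\<forall>n\<ge>n0. norm (lsum q n (\<lambda>ys. ?g (Sh h ys / sqrt (n * v))) - (\<integral>x. ?g x \<partial>N)) < r/3"
      by blast
    have tailN: "0 \<le> c - (\<integral>x. ?g x \<partial>N) \<and> c - (\<integral>x. ?g x \<partial>N) \<le> 1 / B"
    proof -
      have ig: "integrable N ?g"
      proof -
        interpret NN: real_distribution N by (rule rdN)
        show ?thesis using B by (intro NN.integrable_const_bound[where B=B]) auto
      qed
      have "c - (\<integral>x. ?g x \<partial>N) = (\<integral>x. \<bar>x\<bar> - ?g x \<partial>N)"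
        using ig iabs Nabs by (subst Bochner_Integration.integral_diff) auto
      moreover have "(\<integral>x. \<bar>x\<bar> - ?g x \<partial>N) \<le> (\<integral>x. x^2 / B \<partial>N)"
        using ig iabs isq B tail_bound by (intro integral_mono) auto
      moreover have "(\<integral>x. x^2 / B \<partial>N) = 1 / B" using Nsq by simp
      moreover have "0 \<le> (\<integral>x. \<bar>x\<bar> - ?g x \<partial>N)" by (intro integral_nonneg_AE) auto
      ultimately show ?thesis by linarith
    qed
    show "\<exists>no. \<forall>n\<ge>no. norm (a n - c) < r"
    proof (intro exI allI impI)
      fix n assume n: "n \<ge> Suc n0"
      then have npos: "real n > 0" by simp
      have f1: "a n - lsum q n (\<lambda>ys. ?g (Sh h ys / sqrt (n * v))) =
            lsum q n (\<lambda>ys. \<bar>Sh h ys / sqrt (n * v)\<bar> - ?g (Sh h ys / sqrt (n * v)))"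
        unfolding a_def by (rule lsum_diff[symmetric])
      have f2: "lsum q n (\<lambda>ys. \<bar>Sh h ys / sqrt (n * v)\<bar> - ?g (Sh h ys / sqrt (n * v))) \<le> lsum q n (\<lambda>ys. (Sh h ys / sqrt (n * v))^2 / B)"
        by (intro lsum_mono[OF q_nonneg] tail_bound[OF B])
      have f3: "lsum q n (\<lambda>ys. (Sh h ys / sqrt (n * v))^2 / B) = 1 / B"
      proof -
        have "lsum q n (\<lambda>ys. (Sh h ys / sqrt (n * v))^2 / B) = lsum q n (\<lambda>ys. (Sh h ys)^2) / (n * v) / B"
          using npos assms by (simp add: power_divide lsum_divc)
        then show ?thesis using E2 npos assms by simp
      qed
      have f4: "0 \<le> lsum q n (\<lambda>ys. \<bar>Sh h ys / sqrt (n * v)\<bar> - ?g (Sh h ys / sqrt (n * v)))"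
        using lsum_mono[of q n "\<lambda>_. 0"] q_nonneg lsum_const[OF q_sum, of n 0] by fastforce
      have f5: "\<bar>lsum q n (\<lambda>ys. ?g (Sh h ys / sqrt (n * v))) - (\<integral>x. ?g x \<partial>N)\<bar> < r/3"
        using n n0 by (simp del: real_norm_def) (simp only: real_norm_def)
      have f6: "1 / B = r / 4" using r by (simp add: B_def)
      show "norm (a n - c) < r" unfolding real_norm_def using f1 f2 f3 f4 f5 f6 tailN by arith
    qed
  qed
  have "lsum q n (\<lambda>ys. \<bar>Sh h ys\<bar>) / sqrt n = a n * sqrt v" for n
  proof -
    have "a n = lsum q n (\<lambda>ys. \<bar>Sh h ys\<bar>) / sqrt (n * v)"
      unfolding a_def using assms by (simp add: lsum_divc abs_div)
    then show ?thesis using assms by (simp add: real_sqrt_mult field_simps)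
  qed
  then show ?thesis using a_lim unfolding c_def by (simp add: tendsto_mult_right)
qed

end


lemma jensen_split:
  fixes w b :: "'l::finite \<Rightarrow> real"
  assumes "(\<Sum>l\<in>UNIV. w l) = 1" "(\<Sum>l\<in>UNIV. w l * b l) = a"
  shows "(\<Sum>l\<in>UNIV. w l * (b l - p)^2) = (\<Sum>l\<in>UNIV. w l * (b l - a)^2) + (a - p)^2"
proof -
  have "(\<Sum>l\<in>UNIV. w l * (b l - p)^2) = (\<Sum>l\<in>UNIV. w l * (b l - a)^2 + 2 * (a - p) * (w l * b l) - 2 * (a - p) * a * w l + (a - p)^2 * w l)"
    by (intro sum.cong refl) (simp add: power2_eq_square algebra_simps)
  also have "\<dots> = (\<Sum>l\<in>UNIV. w l * (b l - a)^2) + 2 * (a - p) * a - 2 * (a - p) * a * 1 + (a - p)^2 * 1"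
    using assms by (simp add: sum.distrib sum_subtractf sum_distrib_left[symmetric])
  finally show ?thesis by simp
qed

locale two_chan =
  fixes p :: "real^'k::finite" and W W' :: "real^'k^'k"
  assumes p_prob: "prob_vec p" and p_pos: "\<forall>k. p$k > 0"
    and W_rs: "row_stochastic W" and W_inv: "invertible W"
    and W'_rs: "row_stochastic W'" and W'_inv: "invertible W'"
begin

abbreviation "q \<equiv> p v* W"
abbreviation "Mw \<equiv> matrix_inv W"
abbreviation "B \<equiv> matrix_inv (W ** W')"

definition "D k = (\<Sum>j\<in>UNIV. q$j * (\<Sum>l\<in>UNIV. W'$j$l * (B$l$k - Mw$j$k)^2))"

lemma B_eq: "B = matrix_inv W' ** Mw"
  by (rule matrix_inv_mult[OF W_inv W'_inv])

lemma W'B: "W' ** B = Mw"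
  by (simp add: B_eq matrix_mul_assoc inv_lr[OF W'_inv])

lemma a_eq: "(\<Sum>l\<in>UNIV. W'$j$l * B$l$k) = Mw$j$k"
proof -
  have "(W' ** B)$j$k = Mw$j$k" by (simp add: W'B)
  then show ?thesis by (simp add: matrix_matrix_mult_def)
qed

lemma row1: "(\<Sum>l\<in>UNIV. W'$j$l) = 1" using W'_rs by (simp add: row_stochastic_def)
lemma W'_nonneg: "0 \<le> W'$j$l" using W'_rs by (simp add: row_stochastic_def)
lemma q_pos: "q$j > 0" by (rule qV_pos[OF W_rs W_inv p_pos])

lemma var_diff: "varV p (W ** W') k = D k + varV p W k"
proof -
  have "varV p (W ** W') k = (\<Sum>l\<in>UNIV. (q v* W')$l * (B$l$k - p$k)^2)"
    by (simp add: varV_def hk_def vector_matrix_mul_assoc)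
  also have "\<dots> = (\<Sum>l\<in>UNIV. \<Sum>j\<in>UNIV. q$j * (W'$j$l * (B$l$k - p$k)^2))"
    unfolding vector_matrix_mult_def by (simp add: sum_distrib_right mult.assoc)
  also have "\<dots> = (\<Sum>j\<in>UNIV. \<Sum>l\<in>UNIV. q$j * (W'$j$l * (B$l$k - p$k)^2))"
    by (rule sum.swap)
  also have "\<dots> = (\<Sum>j\<in>UNIV. q$j * (\<Sum>l\<in>UNIV. W'$j$l * (B$l$k - p$k)^2))"
    by (simp only: sum_distrib_left)
  also have "\<dots> = (\<Sum>j\<in>UNIV. q$j * (\<Sum>l\<in>UNIV. W'$j$l * (B$l$k - Mw$j$k)^2) + q$j * (Mw$j$k - p$k)^2)"
  proof (intro sum.cong refl)
    fix j
    have "(\<Sum>l\<in>UNIV. W'$j$l * (B$l$k - p$k)^2) = (\<Sum>l\<in>UNIV. W'$j$l * (B$l$k - Mw$j$k)^2) + (Mw$j$k - p$k)^2"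
      by (rule jensen_split[OF row1 a_eq])
    then show "q$j * (\<Sum>l\<in>UNIV. W'$j$l * (B$l$k - p$k)^2) = q$j * (\<Sum>l\<in>UNIV. W'$j$l * (B$l$k - Mw$j$k)^2) + q$j * (Mw$j$k - p$k)^2"
      by (simp add: distrib_left)
  qed
  also have "\<dots> = D k + varV p W k"
    by (simp only: sum.distrib D_def varV_def hk_def)
  finally show ?thesis .
qed

lemma D_nonneg: "0 \<le> D k"
  unfolding D_def using q_pos W'_nonneg
  by (intro sum_nonneg mult_nonneg_nonneg) (auto simp: less_imp_le)

lemma D_zero_iff: "D k = 0 \<longleftrightarrow> (\<forall>j l. W'$j$l > 0 \<longrightarrow> B$l$k = Mw$j$k)"
proof -
  have "D k = 0 \<longleftrightarrow> (\<forall>j. q$j * (\<Sum>l\<in>UNIV. W'$j$l * (B$l$k - Mw$j$k)^2) = 0)"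
    unfolding D_def using q_pos W'_nonneg
    by (subst sum_nonneg_eq_0_iff) (auto intro!: sum_nonneg mult_nonneg_nonneg simp: less_imp_le)
  also have "\<dots> \<longleftrightarrow> (\<forall>j. \<forall>l. W'$j$l * (B$l$k - Mw$j$k)^2 = 0)"
  proof -
    have "q$j * (\<Sum>l\<in>UNIV. W'$j$l * (B$l$k - Mw$j$k)^2) = 0 \<longleftrightarrow> (\<forall>l. W'$j$l * (B$l$k - Mw$j$k)^2 = 0)" for j
    proof -
      have "q$j \<noteq> 0" using q_pos[of j] by simp
      then have "q$j * (\<Sum>l\<in>UNIV. W'$j$l * (B$l$k - Mw$j$k)^2) = 0 \<longleftrightarrow> (\<Sum>l\<in>UNIV. W'$j$l * (B$l$k - Mw$j$k)^2) = 0"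
        by simp
      also have "\<dots> \<longleftrightarrow> (\<forall>l. W'$j$l * (B$l$k - Mw$j$k)^2 = 0)"
        using W'_nonneg by (subst sum_nonneg_eq_0_iff) auto
      finally show ?thesis .
    qed
    then show ?thesis by blast
  qed
  also have "\<dots> \<longleftrightarrow> (\<forall>j l. W'$j$l > 0 \<longrightarrow> B$l$k = Mw$j$k)"
  proof -
    have "W'$j$l * (B$l$k - Mw$j$k)^2 = 0 \<longleftrightarrow> (W'$j$l > 0 \<longrightarrow> B$l$k = Mw$j$k)" for j l
      using W'_nonneg[of j l] by auto
    then show ?thesis by simp
  qed
  finally show ?thesis .
qed

lemma perm_iff: "(\<forall>k. D k = 0) \<longleftrightarrow> permutation_matrix W'"
proof
  assume "permutation_matrix W'"
  then obtain \<sigma> where \<sigma>: "\<sigma> permutes (UNIV::'k set)" "W' = (\<chi> i j. if \<sigma> i = j then 1 else 0)"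
    unfolding permutation_matrix_def by blast
  show "\<forall>k. D k = 0"
  proof (intro allI, subst D_zero_iff, intro allI impI)
    fix k j l assume "W'$j$l > 0"
    then have l: "l = \<sigma> j" using \<sigma>(2) by (auto split: if_splits)
    have "Mw$j$k = (\<Sum>l\<in>UNIV. W'$j$l * B$l$k)" by (simp add: a_eq)
    also have "\<dots> = B$(\<sigma> j)$k"
    proof -
      have w: "W'$j$l = (if l = \<sigma> j then 1 else 0)" for l using \<sigma>(2) by auto
      have "(\<Sum>l\<in>UNIV. W'$j$l * B$l$k) = (\<Sum>l\<in>UNIV. if l = \<sigma> j then B$l$k else 0)"
        by (intro sum.cong refl) (simp add: w)
      also have "\<dots> = B$(\<sigma> j)$k" by (rule trans[OF sum.delta]) simp_all
      finally show ?thesis .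
    qed
    finally show "B$l$k = Mw$j$k" using l by simp
  qed
next
  assume D0: "\<forall>k. D k = 0"
  then have eq: "\<And>j l k. W'$j$l > 0 \<Longrightarrow> B$l$k = Mw$j$k" using D_zero_iff by blast
  have Binv: "invertible B" by (rule invertible_matrix_inv[OF invertible_mult[OF W_inv W'_inv]])
  have ex: "\<exists>l. W'$j$l > 0" for j
  proof (rule ccontr)
    assume "\<not> (\<exists>l. W'$j$l > 0)"
    then have "\<forall>l. W'$j$l = 0" using W'_nonneg by (metis order_le_less)
    then show False using row1[of j] by simp
  qed
  have uniq: "W'$j$l > 0 \<Longrightarrow> W'$j$l' > 0 \<Longrightarrow> l = l'" for j l l'
    using eq rows_inj[OF Binv, of l l'] by metis
  define \<sigma> where "\<sigma> j = (SOME l. W'$j$l > 0)" for j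
  have \<sigma>pos: "W'$j$(\<sigma> j) > 0" for j unfolding \<sigma>_def using ex by (rule someI_ex)
  have zero: "l \<noteq> \<sigma> j \<Longrightarrow> W'$j$l = 0" for j l
    using uniq[OF \<sigma>pos] W'_nonneg by (metis order_le_less)
  have one: "W'$j$(\<sigma> j) = 1" for j
  proof -
    have "(\<Sum>l\<in>UNIV. W'$j$l) = (\<Sum>l\<in>UNIV. if l = \<sigma> j then W'$j$l else 0)"
      by (intro sum.cong refl) (use zero in auto)
    also have "\<dots> = W'$j$(\<sigma> j)" by (rule trans[OF sum.delta]) simp_all
    finally have "(\<Sum>l\<in>UNIV. W'$j$l) = W'$j$(\<sigma> j)" .
    then show ?thesis using row1 by simp
  qed
  have Wform: "W' = (\<chi> i j. if \<sigma> i = j then 1 else 0)"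
    using zero one by (auto simp: vec_eq_iff)
  have "inj \<sigma>"
  proof (rule injI)
    fix j j' assume "\<sigma> j = \<sigma> j'"
    then have "\<forall>l. W'$j$l = W'$j'$l" using Wform by simp
    then show "j = j'" by (rule rows_inj[OF W'_inv])
  qed
  then have "bij \<sigma>" using finite_UNIV_inj_surj[of \<sigma>] by (simp add: bij_def)
  then have "\<sigma> permutes (UNIV::'k set)" by (intro bij_imp_permutes) auto
  then show "permutation_matrix W'" unfolding permutation_matrix_def using Wform by blast
qed

end


lemma taylor3:
  assumes "admissible_f f"
  shows "\<exists>\<delta>>0. \<exists>C\<ge>0. \<exists>c1. \<forall>x. \<bar>x - 1\<bar> \<le> \<delta> \<longrightarrow>
           \<bar>f x - c1 * (x - 1) - ((deriv ^^ 2) f 1 / 2) * (x - 1)^2\<bar> \<le> C * \<bar>x - 1\<bar>^3"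
proof -
  define d where "d \<rho> = (deriv ^^ \<rho>) f 1" for \<rho>
  from assms obtain \<gamma> where \<gamma>: "\<gamma> > 0"
    "(\<lambda>x. f x - (\<Sum>\<rho>=1..4. (deriv ^^ \<rho>) f 1 / fact \<rho> * (x - 1) ^ \<rho>)) \<in> O[at 1](\<lambda>x. \<bar>x - 1\<bar> powr (4 + \<gamma>))"
    and f1: "f 1 = 0"
    unfolding admissible_f_def by blast
  from \<gamma>(2) obtain c where c: "c > 0"
    "eventually (\<lambda>x. norm (f x - (\<Sum>\<rho>=1..4. (deriv ^^ \<rho>) f 1 / fact \<rho> * (x - 1) ^ \<rho>)) \<le> c * norm (\<bar>x - 1\<bar> powr (4 + \<gamma>))) (at (1::real))"
    using landau_o.bigE[OF \<gamma>(2)] by blast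
  then obtain e where e: "e > 0" "\<And>x. x \<noteq> 1 \<Longrightarrow> dist x 1 < e \<Longrightarrow>
      norm (f x - (\<Sum>\<rho>=1..4. (deriv ^^ \<rho>) f 1 / fact \<rho> * (x - 1) ^ \<rho>)) \<le> c * norm (\<bar>x - 1\<bar> powr (4 + \<gamma>))"
    unfolding eventually_at by blast
  have s4: "{1..4::nat} = {1,2,3,4}" by auto
  have P: "(\<Sum>\<rho>=1..4. (deriv ^^ \<rho>) f 1 / fact \<rho> * (x - 1) ^ \<rho>) =
      d 1 * (x - 1) + d 2 / 2 * (x - 1)^2 + d 3 / 6 * (x - 1)^3 + d 4 / 24 * (x - 1)^4" for x :: real
    unfolding s4 d_def by (simp add: fact_numeral)
  define C where "C = c + \<bar>d 3\<bar> / 6 + \<bar>d 4\<bar> / 24"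
  have pos: "min (e/2) 1 > 0" using e by simp
  have Cnn: "C \<ge> 0" using c by (simp add: C_def)
  have "\<forall>x. \<bar>x - 1\<bar> \<le> min (e/2) 1 \<longrightarrow>
           \<bar>f x - d 1 * (x - 1) - ((deriv ^^ 2) f 1 / 2) * (x - 1)^2\<bar> \<le> C * \<bar>x - 1\<bar>^3"
  proof (intro allI impI)
    fix x :: real assume x: "\<bar>x - 1\<bar> \<le> min (e/2) 1"
    define t where "t = x - 1"
    have t1: "\<bar>t\<bar> \<le> 1" using x by (simp add: t_def)
    show "\<bar>f x - d 1 * (x - 1) - ((deriv ^^ 2) f 1 / 2) * (x - 1)^2\<bar> \<le> C * \<bar>x - 1\<bar>^3"
    proof (cases "x = 1")
      case True then show ?thesis using f1 by simp
    next
      case False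
      have "dist x 1 < e" using x e by (simp add: dist_real_def)
      then have b: "\<bar>f x - (d 1 * t + d 2 / 2 * t^2 + d 3 / 6 * t^3 + d 4 / 24 * t^4)\<bar> \<le> c * \<bar>t\<bar> powr (4 + \<gamma>)"
        using e(2)[OF False \<open>dist x 1 < e\<close>] unfolding P real_norm_def t_def by simp
      have "\<bar>t\<bar> powr (4 + \<gamma>) \<le> \<bar>t\<bar> powr 3"
        using t1 \<gamma>(1) by (intro powr_mono') auto
      also have "\<bar>t\<bar> powr 3 = \<bar>t\<bar>^3"
      proof -
        have tp: "\<bar>t\<bar> > 0" using False by (simp add: t_def)
        show ?thesis using powr_realpow[OF tp, of 3] by simp
      qed
      finally have pw: "\<bar>t\<bar> powr (4 + \<gamma>) \<le> \<bar>t\<bar>^3" .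
      have t4: "\<bar>t\<bar>^4 \<le> \<bar>t\<bar>^3" by (rule power_decreasing) (use t1 in auto)
      define E where "E = f x - (d 1 * t + d 2 / 2 * t^2 + d 3 / 6 * t^3 + d 4 / 24 * t^4)"
      have "f x - d 1 * t - d 2 / 2 * t^2 = E + d 3 / 6 * t^3 + d 4 / 24 * t^4"
        by (simp add: E_def algebra_simps)
      then have "\<bar>f x - d 1 * t - d 2 / 2 * t^2\<bar> \<le> \<bar>E\<bar> + \<bar>d 3 / 6 * t^3\<bar> + \<bar>d 4 / 24 * t^4\<bar>"
        using abs_triangle_ineq[of "E + d 3 / 6 * t^3" "d 4 / 24 * t^4"] abs_triangle_ineq[of E "d 3 / 6 * t^3"]
        by linarith
      also have "\<bar>d 3 / 6 * t^3\<bar> = \<bar>d 3\<bar> / 6 * \<bar>t\<bar>^3" by (simp add: abs_mult power_abs)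
      also have "\<bar>d 4 / 24 * t^4\<bar> = \<bar>d 4\<bar> / 24 * \<bar>t\<bar>^4" by (simp add: abs_mult power_abs)
      also have "\<bar>d 4\<bar> / 24 * \<bar>t\<bar>^4 \<le> \<bar>d 4\<bar> / 24 * \<bar>t\<bar>^3" by (rule mult_left_mono[OF t4]) simp
      also have "\<bar>E\<bar> \<le> c * \<bar>t\<bar>^3"
        using b mult_left_mono[OF pw, of c] c(1) unfolding E_def by linarith
      finally have "\<bar>f x - d 1 * t - d 2 / 2 * t^2\<bar> \<le> c * \<bar>t\<bar>^3 + \<bar>d 3\<bar> / 6 * \<bar>t\<bar>^3 + \<bar>d 4\<bar> / 24 * \<bar>t\<bar>^3"
        by linarith
      also have "\<dots> = C * \<bar>x - 1\<bar>^3" by (simp add: C_def t_def algebra_simps)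
      finally show ?thesis by (simp add: t_def d_def)
    qed
  qed
  then show ?thesis using pos Cnn by blast
qed



lemma f_bounded:
  assumes "convex_on {0..} f" "f 1 = 0" "b \<ge> 2"
  shows "\<forall>x\<in>{0..b}. \<bar>f x\<bar> \<le> \<bar>f 0\<bar> + \<bar>f b\<bar> + \<bar>f 2\<bar> + b * \<bar>f 0\<bar>"
proof
  fix x assume x: "x \<in> {0..b}"
  have up: "f x \<le> \<bar>f 0\<bar> + \<bar>f b\<bar>"
  proof -
    define t where "t = x / b"
    have t: "0 \<le> t" "t \<le> 1" using x assms(3) by (auto simp: t_def)
    have "f ((1 - t) *\<^sub>R 0 + t *\<^sub>R b) \<le> (1 - t) * f 0 + t * f b"
      using t assms(3) by (intro convex_onD[OF assms(1)]) auto
    moreover have "(1 - t) *\<^sub>R 0 + t *\<^sub>R b = x" using assms(3) by (simp add: t_def)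
    moreover have "(1 - t) * f 0 \<le> (1 - t) * \<bar>f 0\<bar>" using t by (intro mult_left_mono) auto
    moreover have "(1 - t) * \<bar>f 0\<bar> \<le> 1 * \<bar>f 0\<bar>" using t by (intro mult_right_mono) auto
    moreover have "t * f b \<le> t * \<bar>f b\<bar>" using t by (intro mult_left_mono) auto
    moreover have "t * \<bar>f b\<bar> \<le> 1 * \<bar>f b\<bar>" using t by (intro mult_right_mono) auto
    ultimately show ?thesis by simp
  qed
  have low: "f x \<ge> - (\<bar>f 2\<bar> + b * \<bar>f 0\<bar>)"
  proof (cases "x \<le> 1")
    case True
    define t where "t = (1 - x) / (2 - x)"
    have t: "0 \<le> t" "t \<le> 1" using True x by (auto simp: t_def)
    have "f ((1 - t) *\<^sub>R x + t *\<^sub>R 2) \<le> (1 - t) * f x + t * f 2"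
      using t x by (intro convex_onD[OF assms(1)]) auto
    moreover have "(1 - t) *\<^sub>R x + t *\<^sub>R 2 = 1"
    proof -
      have "2 - x \<noteq> 0" using True by simp
      moreover have "x * x + 4 \<noteq> x * 4"
      proof -
        have "(2 - x) * (2 - x) > 0" using True by simp
        then show ?thesis by (simp add: algebra_simps)
      qed
      ultimately show ?thesis by (simp add: t_def field_simps)
    qed
    ultimately have A: "0 \<le> (1 - t) * f x + t * f 2" using assms(2) by simp
    then have "0 \<le> (2 - x) * ((1 - t) * f x + t * f 2)" using True by simp
    also have "(2 - x) * ((1 - t) * f x + t * f 2) = f x + (1 - x) * f 2"
    proof -
      have nz: "2 - x \<noteq> 0" using True by simp
      have e1: "(2 - x) * (1 - t) = 1" using nz by (simp add: t_def field_simps)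
      have e2: "(2 - x) * t = 1 - x" using nz by (simp add: t_def field_simps)
      have "(2 - x) * ((1 - t) * f x + t * f 2) = ((2 - x) * (1 - t)) * f x + ((2 - x) * t) * f 2"
        by (simp add: algebra_simps)
      then show ?thesis by (simp add: e1 e2)
    qed
    finally have A2: "0 \<le> f x + (1 - x) * f 2" .
    have "(1 - x) * f 2 \<le> (1 - x) * \<bar>f 2\<bar>" using True by (intro mult_left_mono) auto
    also have "\<dots> \<le> 1 * \<bar>f 2\<bar>" using x by (intro mult_right_mono) auto
    finally show ?thesis using A2 abs_ge_zero[of "f 0"] assms(3) mult_nonneg_nonneg[of b "\<bar>f 0\<bar>"] by linarith
  next
    case False
    define t where "t = 1 / x"
    have t: "0 < t" "t \<le> 1" using False by (auto simp: t_def)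
    have "f ((1 - t) *\<^sub>R 0 + t *\<^sub>R x) \<le> (1 - t) * f 0 + t * f x"
      using t x by (intro convex_onD[OF assms(1)]) auto
    moreover have "(1 - t) *\<^sub>R 0 + t *\<^sub>R x = 1" using False by (simp add: t_def)
    ultimately have "0 \<le> (1 - t) * f 0 + t * f x" using assms(2) by simp
    then have "0 \<le> x * ((1 - t) * f 0 + t * f x)" using False by simp
    then have A: "0 \<le> (x - 1) * f 0 + f x" using False by (simp add: t_def algebra_simps)
    have "(x - 1) * f 0 \<le> (x - 1) * \<bar>f 0\<bar>" using False by (intro mult_left_mono) auto
    also have "\<dots> \<le> b * \<bar>f 0\<bar>" using x by (intro mult_right_mono) auto
    finally show ?thesis using A abs_ge_zero[of "f 2"] by linarith
  qed
  have "- f x \<le> \<bar>f 2\<bar> + b * \<bar>f 0\<bar>" using low by linarith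
  moreover have "0 \<le> b * \<bar>f 0\<bar>" using assms(3) by simp
  ultimately show "\<bar>f x\<bar> \<le> \<bar>f 0\<bar> + \<bar>f b\<bar> + \<bar>f 2\<bar> + b * \<bar>f 0\<bar>"
    using up abs_ge_zero[of "f 0"] abs_ge_zero[of "f b"] abs_ge_zero[of "f 2"] by linarith
qed


lemma cube_bound: "\<epsilon> > 0 \<Longrightarrow> \<bar>x\<bar>^3 \<le> \<epsilon> * x^2 + x^4 / \<epsilon>" for x \<epsilon> :: real
proof (cases "\<bar>x\<bar> \<le> \<epsilon>")
  case True
  assume e: "\<epsilon> > 0"
  have "\<bar>x\<bar>^3 = \<bar>x\<bar> * x^2" by (simp add: power2_eq_square power3_eq_cube abs_mult)
  also have "\<dots> \<le> \<epsilon> * x^2" using True by (intro mult_right_mono) auto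
  finally show ?thesis using e by (simp add: add_increasing2)
next
  case False
  assume e: "\<epsilon> > 0"
  have "\<epsilon> * \<bar>x\<bar>^3 \<le> \<bar>x\<bar> * \<bar>x\<bar>^3" using False by (intro mult_right_mono) auto
  also have "\<dots> = x^4" by (simp add: power4_eq_xxxx power3_eq_cube abs_mult[symmetric] abs_mult_self_eq)
  finally have "\<bar>x\<bar>^3 \<le> x^4 / \<epsilon>" using e by (simp add: field_simps)
  then show ?thesis using e by (simp add: add_increasing)
qed

lemma Sh_bound: "(\<forall>y. \<bar>h y\<bar> \<le> (c::real)) \<Longrightarrow> \<bar>Sh h ys\<bar> \<le> real (length ys) * c"
proof (induction ys)
  case (Cons a ys)
  have IH: "\<bar>Sh h ys\<bar> \<le> real (length ys) * c" using Cons by blast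
  have ha: "\<bar>h a\<bar> \<le> c" using Cons.prems by blast
  have "\<bar>Sh h (a # ys)\<bar> = \<bar>h a + Sh h ys\<bar>" by simp
  also have "\<dots> \<le> \<bar>h a\<bar> + \<bar>Sh h ys\<bar>" by (rule abs_triangle_ineq)
  also have "\<dots> \<le> c + real (length ys) * c" using ha IH by (rule add_mono)
  finally have "\<bar>Sh h (a # ys)\<bar> \<le> c + real (length ys) * c" .
  then show ?case by (simp add: algebra_simps)
qed simp

lemma squeeze_lim:
  fixes X Y E s :: "nat \<Rightarrow> real"
  assumes "(\<lambda>n. s n * Y n) \<longlonglongrightarrow> l" "(\<lambda>n. s n * E n) \<longlonglongrightarrow> 0"
    "eventually (\<lambda>n. \<bar>X n - Y n\<bar> \<le> E n) sequentially" "\<And>n. s n \<ge> 0"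
  shows "(\<lambda>n. s n * X n) \<longlonglongrightarrow> l"
proof -
  have "eventually (\<lambda>n. norm (s n * X n - s n * Y n) \<le> s n * E n) sequentially"
    using assms(3) by eventually_elim (use assms(4) in \<open>simp add: abs_mult right_diff_distrib[symmetric] mult_left_mono\<close>)
  then have "(\<lambda>n. s n * X n - s n * Y n) \<longlonglongrightarrow> 0"
    by (rule Lim_null_comparison) (rule assms(2))
  then have "(\<lambda>n. (s n * X n - s n * Y n) + s n * Y n) \<longlonglongrightarrow> 0 + l"
    by (intro tendsto_add assms(1))
  then show ?thesis by simp
qed

locale chan =
  fixes p :: "real^'k::finite" and V :: "real^'k^'k" and Proj :: "real^'k \<Rightarrow> real^'k"
  assumes p_prob: "prob_vec p" and p_pos: "\<forall>k. p$k > 0"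
    and V_rs: "row_stochastic V" and V_inv: "invertible V" and Pv: "valid_proj Proj"
begin

abbreviation "q \<equiv> p v* V"
definition "D k n ys = Sh (hk p V k) ys / real n"

lemma cent: "centered q (hk p V k)" by (rule centered_hk[OF V_rs V_inv p_prob p_pos])

definition "C4 k = centered.m4 q (hk p V k) + 3 * (varV p V k)^2"

lemma q_nonneg: "\<forall>y. 0 \<le> q$y" using centered.q_nonneg[OF cent] .
lemma q_sum1: "sum (\<lambda>y. q$y) UNIV = 1" using centered.q_sum[OF cent] .
lemma var_nonneg: "0 \<le> varV p V k" using centered.v_nonneg[OF cent] varV_eq[OF cent] by simp
lemma C4_nonneg: "0 \<le> C4 k" using centered.m4_nonneg[OF cent] by (simp add: C4_def)

lemma M2: "n > 0 \<Longrightarrow> lsum q n (\<lambda>ys. (D k n ys)^2) = varV p V k / n"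
proof -
  assume n: "n > 0"
  have "lsum q n (\<lambda>ys. (D k n ys)^2) = lsum q n (\<lambda>ys. (Sh (hk p V k) ys)^2) / (real n)^2"
    by (simp add: D_def power_divide lsum_divc)
  also have "\<dots> = varV p V k / n"
    using centered.E2[OF cent, of n k] varV_eq[OF cent] n by (simp add: power2_eq_square)
  finally show ?thesis .
qed

lemma M4: "n > 0 \<Longrightarrow> lsum q n (\<lambda>ys. (D k n ys)^4) \<le> C4 k / (real n)^2"
proof -
  assume n: "n > 0"
  have "lsum q n (\<lambda>ys. (D k n ys)^4) = lsum q n (\<lambda>ys. (Sh (hk p V k) ys)^4) / (real n)^4"
    by (simp add: D_def power_divide lsum_divc)
  also have "\<dots> \<le> C4 k * (real n)^2 / (real n)^4"
    using centered.E4_le[OF cent, of n k] varV_eq[OF cent] n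
    by (intro divide_right_mono) (auto simp: C4_def)
  also have "\<dots> = C4 k / (real n)^2" using n by (simp add: field_simps power2_eq_square power4_eq_xxxx)
  finally show ?thesis .
qed

lemma M3: "n > 0 \<Longrightarrow> lsum q n (\<lambda>ys. \<bar>D k n ys\<bar>^3) \<le> (varV p V k + C4 k) / (real n * sqrt n)"
proof -
  assume n: "n > 0"
  define \<epsilon> where "\<epsilon> = 1 / sqrt n"
  have e: "\<epsilon> > 0" using n by (simp add: \<epsilon>_def)
  have "lsum q n (\<lambda>ys. \<bar>D k n ys\<bar>^3) \<le> lsum q n (\<lambda>ys. \<epsilon> * (D k n ys)^2 + (D k n ys)^4 / \<epsilon>)"
    by (intro lsum_mono[OF q_nonneg] cube_bound[OF e])
  also have "\<dots> = \<epsilon> * lsum q n (\<lambda>ys. (D k n ys)^2) + lsum q n (\<lambda>ys. (D k n ys)^4) / \<epsilon>"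
    by (simp add: lsum_add lsum_cmult lsum_divc)
  also have "\<dots> \<le> \<epsilon> * (varV p V k / n) + (C4 k / (real n)^2) / \<epsilon>"
    using M2[OF n, of k] M4[OF n, of k] e by (intro add_mono divide_right_mono) auto
  also have "\<dots> = (varV p V k + C4 k) / (real n * sqrt n)"
  proof -
    have s: "sqrt (real n) * sqrt (real n) = real n" using n by simp
    have "(C4 k / (real n)^2) / \<epsilon> = C4 k / (real n * sqrt n)"
      using n by (simp add: \<epsilon>_def field_simps power2_eq_square s)
    moreover have "\<epsilon> * (varV p V k / n) = varV p V k / (real n * sqrt n)"
      using n by (simp add: \<epsilon>_def field_simps)
    ultimately show ?thesis by (simp add: add_divide_distrib)
  qed
  finally show ?thesis .
qed

definition "errb n = (\<Sum>k\<in>UNIV. (varV p V k + C4 k) / (real n * sqrt n) + C4 k / (real n)^2)"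

lemma err_bound:
  assumes n: "n > 0" and A: "A \<ge> 0"
    and pw: "\<forall>ys. length ys = n \<longrightarrow> \<bar>L ys - \<Phi> ys\<bar> \<le> A * (\<Sum>k\<in>UNIV. \<bar>D k n ys\<bar>^3 + (D k n ys)^4)"
  shows "\<bar>lsum q n L - lsum q n \<Phi>\<bar> \<le> A * errb n"
proof -
  have "\<bar>lsum q n L - lsum q n \<Phi>\<bar> = \<bar>lsum q n (\<lambda>ys. L ys - \<Phi> ys)\<bar>" by (simp add: lsum_diff)
  also have "\<dots> \<le> lsum q n (\<lambda>ys. \<bar>L ys - \<Phi> ys\<bar>)" by (rule lsum_abs[OF q_nonneg])
  also have "\<dots> \<le> lsum q n (\<lambda>ys. A * (\<Sum>k\<in>UNIV. \<bar>D k n ys\<bar>^3 + (D k n ys)^4))"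
    using pw by (intro lsum_mono[OF q_nonneg]) auto
  also have "\<dots> = A * (\<Sum>k\<in>UNIV. lsum q n (\<lambda>ys. \<bar>D k n ys\<bar>^3) + lsum q n (\<lambda>ys. (D k n ys)^4))"
    by (simp add: lsum_cmult lsum_sum lsum_add)
  also have "\<dots> \<le> A * errb n"
    unfolding errb_def using M3[OF n] M4[OF n] A by (intro mult_left_mono sum_mono add_mono) auto
  finally show ?thesis .
qed

lemma errb_lim1: "(\<lambda>n. real n * errb n) \<longlonglongrightarrow> 0"
proof -
  have "(\<lambda>n. real n * ((varV p V k + C4 k) / (real n * sqrt n) + C4 k / (real n)^2)) \<longlonglongrightarrow> 0" for k
    by real_asymp
  then have "(\<lambda>n. \<Sum>k\<in>UNIV. real n * ((varV p V k + C4 k) / (real n * sqrt n) + C4 k / (real n)^2)) \<longlonglongrightarrow> (\<Sum>k\<in>(UNIV::'k set). 0)"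
    by (intro tendsto_sum) auto
  then show ?thesis by (simp add: errb_def sum_distrib_left)
qed

lemma errb_lim2: "(\<lambda>n. sqrt n * errb n) \<longlonglongrightarrow> 0"
proof -
  have "(\<lambda>n. sqrt n * ((varV p V k + C4 k) / (real n * sqrt n) + C4 k / (real n)^2)) \<longlonglongrightarrow> 0" for k
    by real_asymp
  then have "(\<lambda>n. \<Sum>k\<in>UNIV. sqrt n * ((varV p V k + C4 k) / (real n * sqrt n) + C4 k / (real n)^2)) \<longlonglongrightarrow> (\<Sum>k\<in>(UNIV::'k set). 0)"
    by (intro tendsto_sum) auto
  then show ?thesis by (simp add: errb_def sum_distrib_left)
qed

end


lemma prob_le1: "prob_vec v \<Longrightarrow> 0 \<le> v$k \<and> v$k \<le> (1::real)"
proof -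
  assume pv: "prob_vec v"
  then have "v$k \<le> (\<Sum>l\<in>UNIV. v$l)" unfolding prob_vec_def by (intro member_le_sum) auto
  then show ?thesis using pv unfolding prob_vec_def by auto
qed

context chan begin

definition "pm = Min (range (\<lambda>k. p$k))"
lemma pm_le: "pm \<le> p$k" unfolding pm_def by (intro Min_le) auto
lemma pm_pos: "pm > 0"
proof -
  have "pm \<in> range (\<lambda>k. p$k)" unfolding pm_def by (intro Min_in) auto
  then show ?thesis using p_pos by auto
qed

definition "Hb = (\<Sum>k\<in>UNIV. \<Sum>y\<in>UNIV. \<bar>hk p V k y\<bar>)"
lemma hk_le: "\<bar>hk p V k y\<bar> \<le> Hb"
proof -
  have "\<bar>hk p V k y\<bar> \<le> (\<Sum>y\<in>UNIV. \<bar>hk p V k y\<bar>)" by (intro member_le_sum) auto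
  also have "\<dots> \<le> Hb" unfolding Hb_def by (intro member_le_sum sum_nonneg) auto
  finally show ?thesis .
qed
lemma Hb_nonneg: "0 \<le> Hb" unfolding Hb_def by (intro sum_nonneg) auto

lemma D_le: "length ys = n \<Longrightarrow> n > 0 \<Longrightarrow> \<bar>D k n ys\<bar> \<le> Hb"
proof -
  assume ys: "length ys = n" and n: "n > 0"
  have "\<bar>Sh (hk p V k) ys\<bar> \<le> real n * Hb" using Sh_bound[of "hk p V k" Hb ys] hk_le ys by auto
  then show ?thesis using n by (simp add: D_def abs_div field_simps)
qed

lemma u_eq: "length ys = n \<Longrightarrow> n > 0 \<Longrightarrow> (emp_dist ys v* matrix_inv V)$k = p$k + D k n ys"
  unfolding D_def by (rule emp_M)

lemma u_sum: "length ys = n \<Longrightarrow> n > 0 \<Longrightarrow> (\<Sum>k\<in>UNIV. (emp_dist ys v* matrix_inv V)$k) = 1"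
  by (rule emp_M_sum[OF _ _ V_rs V_inv])

lemma D_sum0: "length ys = n \<Longrightarrow> n > 0 \<Longrightarrow> (\<Sum>k\<in>UNIV. D k n ys) = 0"
proof -
  assume a: "length ys = n" "n > 0"
  have "1 = (\<Sum>k\<in>UNIV. p$k + D k n ys)" using u_sum[OF a] u_eq[OF a] by simp
  also have "\<dots> = 1 + (\<Sum>k\<in>UNIV. D k n ys)" using p_prob by (simp add: sum.distrib prob_vec_def)
  finally show ?thesis by simp
qed

lemma ph_prob: "length ys = n \<Longrightarrow> n > 0 \<Longrightarrow> prob_vec (p_hat Proj V ys)"
  using Pv u_sum unfolding valid_proj_def p_hat_def by blast

lemma ph_good:
  assumes "length ys = n" "n > 0" "\<forall>k. \<bar>D k n ys\<bar> \<le> pm"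
  shows "p_hat Proj V ys $ k = p$k + D k n ys"
proof -
  have "prob_vec (emp_dist ys v* matrix_inv V)"
    unfolding prob_vec_def
  proof
    show "\<forall>k. 0 \<le> (emp_dist ys v* matrix_inv V)$k"
    proof
      fix k
      have "p$k + D k n ys \<ge> 0" using assms(3) pm_le[of k] by (smt (verit))
      then show "0 \<le> (emp_dist ys v* matrix_inv V)$k" using u_eq[OF assms(1,2)] by simp
    qed
    show "(\<Sum>k\<in>UNIV. (emp_dist ys v* matrix_inv V)$k) = 1" by (rule u_sum[OF assms(1,2)])
  qed
  then have "p_hat Proj V ys = emp_dist ys v* matrix_inv V"
    using Pv unfolding valid_proj_def p_hat_def by blast
  then show ?thesis using u_eq[OF assms(1,2)] by simp
qed

lemma bad_bound:
  assumes "\<delta> > 0" "\<not> (\<forall>k. \<bar>D k n ys\<bar> \<le> \<delta>)"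
  shows "1 \<le> (\<Sum>k\<in>UNIV. (D k n ys)^4) / \<delta>^4"
proof -
  obtain k where k: "\<bar>D k n ys\<bar> > \<delta>" using assms(2) by (auto simp: not_le)
  have "\<delta>^4 \<le> \<bar>D k n ys\<bar>^4" using k assms(1) by (intro power_mono) auto
  also have "\<dots> = (D k n ys)^4" by simp
  also have "\<dots> \<le> (\<Sum>k\<in>UNIV. (D k n ys)^4)" by (intro member_le_sum) auto
  finally show ?thesis using assms(1) by simp
qed

lemma pointwise_generic:
  assumes d: "0 < \<delta>" and A1: "A1 \<ge> 0" and C: "C \<ge> 0"
    and good: "\<And>ys. length ys = n \<Longrightarrow> (\<forall>k. \<bar>D k n ys\<bar> \<le> \<delta>) \<Longrightarrow> \<bar>L ys - \<Phi> ys\<bar> \<le> A1 * (\<Sum>k\<in>UNIV. \<bar>D k n ys\<bar>^3)"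
    and bnd: "\<And>ys. length ys = n \<Longrightarrow> \<bar>L ys - \<Phi> ys\<bar> \<le> C"
  shows "\<forall>ys. length ys = n \<longrightarrow> \<bar>L ys - \<Phi> ys\<bar> \<le> (A1 + C / \<delta>^4) * (\<Sum>k\<in>UNIV. \<bar>D k n ys\<bar>^3 + (D k n ys)^4)"
proof (intro allI impI)
  fix ys :: "'k list" assume ys: "length ys = n"
  define S3 where "S3 = (\<Sum>k\<in>UNIV. \<bar>D k n ys\<bar>^3)"
  define S4 where "S4 = (\<Sum>k\<in>UNIV. (D k n ys)^4)"
  have S3: "S3 \<ge> 0" unfolding S3_def by (intro sum_nonneg) auto
  have S4: "S4 \<ge> 0" unfolding S4_def by (intro sum_nonneg) auto
  have e: "(\<Sum>k\<in>UNIV. \<bar>D k n ys\<bar>^3 + (D k n ys)^4) = S3 + S4" by (simp add: S3_def S4_def sum.distrib)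
  have Cd: "C / \<delta>^4 \<ge> 0" using C d by simp
  show "\<bar>L ys - \<Phi> ys\<bar> \<le> (A1 + C / \<delta>^4) * (\<Sum>k\<in>UNIV. \<bar>D k n ys\<bar>^3 + (D k n ys)^4)"
  proof (cases "\<forall>k. \<bar>D k n ys\<bar> \<le> \<delta>")
    case True
    have "\<bar>L ys - \<Phi> ys\<bar> \<le> A1 * S3" using good[OF ys True] by (simp add: S3_def)
    also have "\<dots> \<le> (A1 + C / \<delta>^4) * (S3 + S4)"
    proof -
      have "0 \<le> A1 * S4 + C / \<delta>^4 * (S3 + S4)"
        using A1 Cd S3 S4 by (intro add_nonneg_nonneg mult_nonneg_nonneg) auto
      moreover have "(A1 + C / \<delta>^4) * (S3 + S4) = A1 * S3 + (A1 * S4 + C / \<delta>^4 * (S3 + S4))"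
        by (simp add: algebra_simps add_divide_distrib)
      ultimately show ?thesis by linarith
    qed
    finally show ?thesis by (simp add: e)
  next
    case False
    have "1 \<le> S4 / \<delta>^4" using bad_bound[OF d False] by (simp add: S4_def)
    then have "C * 1 \<le> C * (S4 / \<delta>^4)" using C by (intro mult_left_mono)
    then have "C \<le> C * (S4 / \<delta>^4)" by simp
    also have "\<dots> = C / \<delta>^4 * S4" by simp
    also have "\<dots> \<le> (A1 + C / \<delta>^4) * (S3 + S4)"
    proof -
      have "0 \<le> A1 * (S3 + S4) + C / \<delta>^4 * S3"
        using A1 Cd S3 S4 by (intro add_nonneg_nonneg mult_nonneg_nonneg) auto
      moreover have "(A1 + C / \<delta>^4) * (S3 + S4) = C / \<delta>^4 * S4 + (A1 * (S3 + S4) + C / \<delta>^4 * S3)"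
        by (simp add: algebra_simps add_divide_distrib)
      ultimately show ?thesis by linarith
    qed
    finally show ?thesis using bnd[OF ys] by (simp add: e)
  qed
qed

lemma sum_abs_diff: "\<bar>(\<Sum>k\<in>UNIV. a k) - (\<Sum>k\<in>UNIV. b k)\<bar> \<le> (\<Sum>k\<in>(UNIV::'k set). \<bar>a k - b k\<bar>)" for a b :: "'k \<Rightarrow> real"
  by (simp add: sum_subtractf[symmetric] sum_abs)

end


lemma sq_le: "\<bar>x\<bar> \<le> c \<Longrightarrow> x^2 \<le> c^2" for x c :: real
  using power_mono[of "\<bar>x\<bar>" c 2] by simp

context chan begin

lemma loss_mse_eq: "loss_mse Proj p V n = lsum q n (\<lambda>ys. \<Sum>k\<in>UNIV. (p_hat Proj V ys $ k - p$k)^2)"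
  by (simp add: loss_mse_def expected_loss_def lsum_def)
lemma loss_tv_eq: "loss_tv Proj p V n = lsum q n (\<lambda>ys. \<Sum>k\<in>UNIV. \<bar>p_hat Proj V ys $ k - p$k\<bar>)"
  by (simp add: loss_tv_def expected_loss_def lsum_def)
lemma loss_fdiv_eq: "loss_fdiv f Proj p V n = lsum q n (\<lambda>ys. \<Sum>k\<in>UNIV. p$k * f (p_hat Proj V ys $ k / p$k))"
  by (simp add: loss_fdiv_def expected_loss_def lsum_def)

lemma ph_diff_le1: "length ys = n \<Longrightarrow> n > 0 \<Longrightarrow> \<bar>p_hat Proj V ys $ k - p$k\<bar> \<le> 1"
  using prob_le1[OF ph_prob, of ys n k] prob_le1[OF p_prob, of k] by auto

lemma mse_lim: "(\<lambda>n. real n * loss_mse Proj p V n) \<longlonglongrightarrow> (\<Sum>k\<in>UNIV. varV p V k)"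
proof -
  define Lm where "Lm ys = (\<Sum>k\<in>UNIV. (p_hat Proj V ys $ k - p$k)^2)" for ys
  define \<Phi> where "\<Phi> n ys = (\<Sum>k\<in>UNIV. (D k n ys)^2)" for n ys
  define C where "C = real CARD('k) + real CARD('k) * Hb^2"
  define A where "A = 0 + C / pm^4"
  have C: "C \<ge> 0" unfolding C_def by simp
  have A: "A \<ge> 0" unfolding A_def using C pm_pos by simp
  have pw: "\<forall>ys. length ys = n \<longrightarrow> \<bar>Lm ys - \<Phi> n ys\<bar> \<le> A * (\<Sum>k\<in>UNIV. \<bar>D k n ys\<bar>^3 + (D k n ys)^4)"
    if n: "n > 0" for n
    unfolding A_def
  proof (rule pointwise_generic[OF pm_pos _ C])
    fix ys :: "'k list" assume ys: "length ys = n" and g: "\<forall>k. \<bar>D k n ys\<bar> \<le> pm"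
    have "Lm ys = \<Phi> n ys" unfolding Lm_def \<Phi>_def using ph_good[OF ys n g] by simp
    then show "\<bar>Lm ys - \<Phi> n ys\<bar> \<le> 0 * (\<Sum>k\<in>UNIV. \<bar>D k n ys\<bar>^3)" by simp
  next
    fix ys :: "'k list" assume ys: "length ys = n"
    have "Lm ys \<le> (\<Sum>k\<in>(UNIV::'k set). 1)" unfolding Lm_def
      using sq_le[OF ph_diff_le1[OF ys n]] by (intro sum_mono) simp
    moreover have "\<Phi> n ys \<le> (\<Sum>k\<in>(UNIV::'k set). Hb^2)" unfolding \<Phi>_def
      using sq_le[OF D_le[OF ys n]] by (intro sum_mono) simp
    moreover have "Lm ys \<ge> 0" "\<Phi> n ys \<ge> 0" unfolding Lm_def \<Phi>_def by (auto intro: sum_nonneg)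
    ultimately show "\<bar>Lm ys - \<Phi> n ys\<bar> \<le> C" unfolding C_def by simp
  qed simp
  show ?thesis
  proof (rule squeeze_lim[where Y = "\<lambda>n. lsum q n (\<Phi> n)" and E = "\<lambda>n. A * errb n"])
    have "eventually (\<lambda>n. real n * lsum q n (\<Phi> n) = (\<Sum>k\<in>UNIV. varV p V k)) sequentially"
    proof (rule eventually_sequentiallyI[of 1])
      fix n :: nat assume "n \<ge> 1"
      then have n: "n > 0" by simp
      have "lsum q n (\<Phi> n) = (\<Sum>k\<in>UNIV. varV p V k / n)" unfolding \<Phi>_def
        by (simp add: lsum_sum M2[OF n])
      then show "real n * lsum q n (\<Phi> n) = (\<Sum>k\<in>UNIV. varV p V k)"
        using n by (simp add: sum_distrib_left)
    qed
    then show "(\<lambda>n. real n * lsum q n (\<Phi> n)) \<longlonglongrightarrow> (\<Sum>k\<in>UNIV. varV p V k)"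
      by (rule tendsto_eventually)
    show "(\<lambda>n. real n * (A * errb n)) \<longlonglongrightarrow> 0"
      using tendsto_mult_right_zero[OF errb_lim1, of A] by (simp add: ac_simps)
    show "eventually (\<lambda>n. \<bar>loss_mse Proj p V n - lsum q n (\<Phi> n)\<bar> \<le> A * errb n) sequentially"
    proof (rule eventually_sequentiallyI[of 1])
      fix n :: nat assume "n \<ge> 1"
      then have n: "n > 0" by simp
      show "\<bar>loss_mse Proj p V n - lsum q n (\<Phi> n)\<bar> \<le> A * errb n"
        unfolding loss_mse_eq Lm_def[symmetric] by (rule err_bound[OF n A pw[OF n]])
    qed
  qed simp
qed

lemma abs_lim_k: "(\<lambda>n. lsum q n (\<lambda>ys. \<bar>Sh (hk p V k) ys\<bar>) / sqrt n) \<longlonglongrightarrow> sqrt (2/pi) * sqrt (varV p V k)"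
proof (cases "varV p V k > 0")
  case True
  then show ?thesis using centered.clt_abs[OF cent, of k] varV_eq[OF cent] by simp
next
  case False
  then have v0: "varV p V k = 0" using var_nonneg[of k] by simp
  have "\<forall>y. (p v* V)$y * (hk p V k y)^2 = 0"
    using v0 q_nonneg unfolding varV_def by (subst (asm) sum_nonneg_eq_0_iff) auto
  then have "\<forall>y. \<bar>hk p V k y\<bar> \<le> 0" using qV_pos[OF V_rs V_inv p_pos] by (metis abs_le_zero_iff less_irrefl mult_eq_0_iff power_eq_0_iff)
  then have "\<bar>Sh (hk p V k) ys\<bar> \<le> 0" for ys using Sh_bound[of "hk p V k" 0 ys] by simp
  then have "lsum q n (\<lambda>ys. \<bar>Sh (hk p V k) ys\<bar>) = 0" for n
    using lsum_const[OF q_sum1, of n 0] by (simp add: lsum_def)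
  then show ?thesis using v0 by simp
qed

lemma tv_lim: "(\<lambda>n. sqrt n * loss_tv Proj p V n) \<longlonglongrightarrow> sqrt (2/pi) * (\<Sum>k\<in>UNIV. sqrt (varV p V k))"
proof -
  define Lt where "Lt ys = (\<Sum>k\<in>UNIV. \<bar>p_hat Proj V ys $ k - p$k\<bar>)" for ys
  define \<Phi> where "\<Phi> n ys = (\<Sum>k\<in>UNIV. \<bar>D k n ys\<bar>)" for n ys
  define C where "C = real CARD('k) + real CARD('k) * Hb"
  define A where "A = 0 + C / pm^4"
  have C: "C \<ge> 0" unfolding C_def using Hb_nonneg by simp
  have A: "A \<ge> 0" unfolding A_def using C pm_pos by simp
  have pw: "\<forall>ys. length ys = n \<longrightarrow> \<bar>Lt ys - \<Phi> n ys\<bar> \<le> A * (\<Sum>k\<in>UNIV. \<bar>D k n ys\<bar>^3 + (D k n ys)^4)"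
    if n: "n > 0" for n
    unfolding A_def
  proof (rule pointwise_generic[OF pm_pos _ C])
    fix ys :: "'k list" assume ys: "length ys = n" and g: "\<forall>k. \<bar>D k n ys\<bar> \<le> pm"
    have "Lt ys = \<Phi> n ys" unfolding Lt_def \<Phi>_def using ph_good[OF ys n g] by simp
    then show "\<bar>Lt ys - \<Phi> n ys\<bar> \<le> 0 * (\<Sum>k\<in>UNIV. \<bar>D k n ys\<bar>^3)" by simp
  next
    fix ys :: "'k list" assume ys: "length ys = n"
    have "Lt ys \<le> (\<Sum>k\<in>(UNIV::'k set). 1)" unfolding Lt_def
      using ph_diff_le1[OF ys n] by (intro sum_mono) simp
    moreover have "\<Phi> n ys \<le> (\<Sum>k\<in>(UNIV::'k set). Hb)" unfolding \<Phi>_def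
      using D_le[OF ys n] by (intro sum_mono) simp
    moreover have "Lt ys \<ge> 0" "\<Phi> n ys \<ge> 0" unfolding Lt_def \<Phi>_def by (auto intro: sum_nonneg)
    ultimately show "\<bar>Lt ys - \<Phi> n ys\<bar> \<le> C" unfolding C_def by simp
  qed simp
  show ?thesis
  proof (rule squeeze_lim[where Y = "\<lambda>n. lsum q n (\<Phi> n)" and E = "\<lambda>n. A * errb n"])
    have "eventually (\<lambda>n. (\<Sum>k\<in>UNIV. lsum q n (\<lambda>ys. \<bar>Sh (hk p V k) ys\<bar>) / sqrt n) = sqrt n * lsum q n (\<Phi> n)) sequentially"
    proof (rule eventually_sequentiallyI[of 1])
      fix n :: nat assume "n \<ge> 1"
      then have n: "n > 0" by simp
      have s: "sqrt (real n) * sqrt (real n) = real n" by simp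
      have "lsum q n (\<Phi> n) = (\<Sum>k\<in>UNIV. lsum q n (\<lambda>ys. \<bar>Sh (hk p V k) ys\<bar>) / n)" unfolding \<Phi>_def D_def
        by (simp add: lsum_sum abs_div lsum_divc)
      then show "(\<Sum>k\<in>UNIV. lsum q n (\<lambda>ys. \<bar>Sh (hk p V k) ys\<bar>) / sqrt n) = sqrt n * lsum q n (\<Phi> n)"
      proof -
        have t: "y / sqrt n = sqrt n * (y / n)" for y
        proof -
          have nz: "sqrt (real n) \<noteq> 0" using n by simp
          have "y / sqrt n = (y * sqrt n) / (sqrt n * sqrt n)"
            by (rule nonzero_mult_divide_mult_cancel_right[OF nz, symmetric])
          also have "\<dots> = (y * sqrt n) / n" by (simp only: s)
          also have "\<dots> = sqrt n * (y / n)" by simp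
          finally show ?thesis .
        qed
        show ?thesis unfolding \<open>lsum q n (\<Phi> n) = _\<close> by (simp add: t sum_distrib_left)
      qed
    qed
    moreover have "(\<lambda>n. \<Sum>k\<in>UNIV. lsum q n (\<lambda>ys. \<bar>Sh (hk p V k) ys\<bar>) / sqrt n) \<longlonglongrightarrow> (\<Sum>k\<in>UNIV. sqrt (2/pi) * sqrt (varV p V k))"
      by (intro tendsto_sum abs_lim_k)
    ultimately show "(\<lambda>n. sqrt n * lsum q n (\<Phi> n)) \<longlonglongrightarrow> sqrt (2/pi) * (\<Sum>k\<in>UNIV. sqrt (varV p V k))"
      by (simp add: sum_distrib_left tendsto_cong)
    show "(\<lambda>n. sqrt n * (A * errb n)) \<longlonglongrightarrow> 0"
      using tendsto_mult_right_zero[OF errb_lim2, of A] by (simp add: ac_simps)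
    show "eventually (\<lambda>n. \<bar>loss_tv Proj p V n - lsum q n (\<Phi> n)\<bar> \<le> A * errb n) sequentially"
    proof (rule eventually_sequentiallyI[of 1])
      fix n :: nat assume "n \<ge> 1"
      then have n: "n > 0" by simp
      show "\<bar>loss_tv Proj p V n - lsum q n (\<Phi> n)\<bar> \<le> A * errb n"
        unfolding loss_tv_eq Lt_def[symmetric] by (rule err_bound[OF n A pw[OF n]])
    qed
  qed simp
qed

end


context chan begin

lemma fdiv_lim:
  assumes adm: "admissible_f f"
  shows "(\<lambda>n. real n * loss_fdiv f Proj p V n) \<longlonglongrightarrow> ((deriv ^^ 2) f 1 / 2) * (\<Sum>k\<in>UNIV. varV p V k / p$k)"
proof -
  define c2 where "c2 = (deriv ^^ 2) f 1 / 2"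
  obtain \<delta>0 Cf c1 where d0: "\<delta>0 > 0" and Cf: "Cf \<ge> 0" and tay: "\<And>x. \<bar>x - 1\<bar> \<le> \<delta>0 \<Longrightarrow>
      \<bar>f x - c1 * (x - 1) - c2 * (x - 1)^2\<bar> \<le> Cf * \<bar>x - 1\<bar>^3"
    using taylor3[OF adm] unfolding c2_def by blast
  have conv: "convex_on {0..} f" and f1: "f 1 = 0" using adm unfolding admissible_f_def by auto
  define \<delta> where "\<delta> = min pm (\<delta>0 * pm)"
  have \<delta>: "\<delta> > 0" "\<delta> \<le> pm" "\<delta> \<le> \<delta>0 * pm" using pm_pos d0 by (auto simp: \<delta>_def)
  define b where "b = max 2 (1 / pm)"
  have b2: "b \<ge> 2" by (simp add: b_def)
  define Fb where "Fb = \<bar>f 0\<bar> + \<bar>f b\<bar> + \<bar>f 2\<bar> + b * \<bar>f 0\<bar>"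
  have Fb: "\<And>x. x \<in> {0..b} \<Longrightarrow> \<bar>f x\<bar> \<le> Fb" using f_bounded[OF conv f1 b2] unfolding Fb_def by blast
  have Fb0: "Fb \<ge> 0" unfolding Fb_def using b2 by simp
  define Lf where "Lf ys = (\<Sum>k\<in>UNIV. p$k * f (p_hat Proj V ys $ k / p$k))" for ys
  define \<Phi> where "\<Phi> n ys = (\<Sum>k\<in>UNIV. c2 * (D k n ys)^2 / p$k)" for n ys
  define A1 where "A1 = Cf / pm^2"
  define C where "C = real CARD('k) * Fb + real CARD('k) * (\<bar>c2\<bar> * Hb^2 / pm)"
  define A where "A = A1 + C / \<delta>^4"
  have A1: "A1 \<ge> 0" unfolding A1_def using Cf by simp
  have C: "C \<ge> 0" unfolding C_def using Fb0 pm_pos by simp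
  have A: "A \<ge> 0" unfolding A_def using A1 C \<delta> by simp
  have pw: "\<forall>ys. length ys = n \<longrightarrow> \<bar>Lf ys - \<Phi> n ys\<bar> \<le> A * (\<Sum>k\<in>UNIV. \<bar>D k n ys\<bar>^3 + (D k n ys)^4)"
    if n: "n > 0" for n
    unfolding A_def
  proof (rule pointwise_generic[OF \<delta>(1) A1 C])
    fix ys :: "'k list" assume ys: "length ys = n" and g: "\<forall>k. \<bar>D k n ys\<bar> \<le> \<delta>"
    have g': "\<forall>k. \<bar>D k n ys\<bar> \<le> pm" using g \<delta>(2) by (meson order_trans)
    have trm: "\<bar>p$k * f (p_hat Proj V ys $ k / p$k) - (c1 * D k n ys + c2 * (D k n ys)^2 / p$k)\<bar>
        \<le> A1 * \<bar>D k n ys\<bar>^3" for k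
    proof -
      have pk: "p$k > 0" using p_pos by simp
      define t where "t = D k n ys / p$k"
      have x: "p_hat Proj V ys $ k / p$k = 1 + t"
        using ph_good[OF ys n g'] pk by (simp add: t_def field_simps)
      have "\<bar>t\<bar> \<le> \<delta>0"
      proof -
        have "\<bar>D k n ys\<bar> \<le> \<delta>0 * p$k"
          using g \<delta>(3) mult_left_mono[OF pm_le[of k], of \<delta>0] d0 by (meson less_imp_le order_trans)
        then show ?thesis using pk by (simp add: t_def abs_div field_simps)
      qed
      then have tb: "\<bar>f (1 + t) - c1 * t - c2 * t^2\<bar> \<le> Cf * \<bar>t\<bar>^3" using tay[of "1 + t"] by simp
      have "p$k * f (p_hat Proj V ys $ k / p$k) - (c1 * D k n ys + c2 * (D k n ys)^2 / p$k)
          = p$k * (f (1 + t) - c1 * t - c2 * t^2)"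
        using pk unfolding x by (simp add: t_def field_simps power2_eq_square)
      then have "\<bar>p$k * f (p_hat Proj V ys $ k / p$k) - (c1 * D k n ys + c2 * (D k n ys)^2 / p$k)\<bar>
          = p$k * \<bar>f (1 + t) - c1 * t - c2 * t^2\<bar>" using pk by (simp add: abs_mult)
      also have "\<dots> \<le> p$k * (Cf * \<bar>t\<bar>^3)" using tb pk by (intro mult_left_mono) auto
      also have "\<dots> = Cf * \<bar>D k n ys\<bar>^3 / (p$k)^2"
        using pk by (simp add: t_def abs_div power_divide field_simps power2_eq_square power3_eq_cube)
      also have "\<dots> \<le> Cf * \<bar>D k n ys\<bar>^3 / pm^2"
        using pk pm_pos pm_le[of k] Cf
        by (intro divide_left_mono mult_nonneg_nonneg power_mono mult_pos_pos) auto
      also have "\<dots> = A1 * \<bar>D k n ys\<bar>^3" by (simp add: A1_def)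
      finally show ?thesis .
    qed
    have "Lf ys - \<Phi> n ys = (\<Sum>k\<in>UNIV. p$k * f (p_hat Proj V ys $ k / p$k) - (c1 * D k n ys + c2 * (D k n ys)^2 / p$k))
        + c1 * (\<Sum>k\<in>UNIV. D k n ys)"
      unfolding Lf_def \<Phi>_def by (simp add: sum_subtractf sum.distrib sum_distrib_left)
    also have "(\<Sum>k\<in>UNIV. D k n ys) = 0" by (rule D_sum0[OF ys n])
    finally have "\<bar>Lf ys - \<Phi> n ys\<bar> \<le> (\<Sum>k\<in>UNIV. \<bar>p$k * f (p_hat Proj V ys $ k / p$k) - (c1 * D k n ys + c2 * (D k n ys)^2 / p$k)\<bar>)"
      by (simp add: sum_abs)
    also have "\<dots> \<le> (\<Sum>k\<in>UNIV. A1 * \<bar>D k n ys\<bar>^3)" by (intro sum_mono trm)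
    finally show "\<bar>Lf ys - \<Phi> n ys\<bar> \<le> A1 * (\<Sum>k\<in>UNIV. \<bar>D k n ys\<bar>^3)" by (simp add: sum_distrib_left)
  next
    fix ys :: "'k list" assume ys: "length ys = n"
    have "\<bar>Lf ys\<bar> \<le> (\<Sum>k\<in>(UNIV::'k set). Fb)" unfolding Lf_def
    proof (rule order_trans[OF sum_abs], intro sum_mono)
      fix k
      have pk: "p$k > 0" "p$k \<le> 1" using p_pos prob_le1[OF p_prob, of k] by auto
      have ph: "0 \<le> p_hat Proj V ys $ k" "p_hat Proj V ys $ k \<le> 1" using prob_le1[OF ph_prob[OF ys n], of k] by auto
      have "p_hat Proj V ys $ k / p$k \<le> 1 / p$k" using ph pk by (intro divide_right_mono) auto
      also have "1 / p$k \<le> 1 / pm" using pk pm_pos pm_le[of k] by (intro divide_left_mono) auto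
      also have "\<dots> \<le> b" by (simp add: b_def)
      finally have "p_hat Proj V ys $ k / p$k \<in> {0..b}" using ph pk by auto
      then have "\<bar>f (p_hat Proj V ys $ k / p$k)\<bar> \<le> Fb" by (rule Fb)
      then have "p$k * \<bar>f (p_hat Proj V ys $ k / p$k)\<bar> \<le> 1 * Fb" using pk Fb0 by (intro mult_mono) auto
      then show "\<bar>p$k * f (p_hat Proj V ys $ k / p$k)\<bar> \<le> Fb" using pk by (simp add: abs_mult)
    qed
    moreover have "\<bar>\<Phi> n ys\<bar> \<le> (\<Sum>k\<in>(UNIV::'k set). \<bar>c2\<bar> * Hb^2 / pm)" unfolding \<Phi>_def
    proof (rule order_trans[OF sum_abs], intro sum_mono)
      fix k
      have pk: "p$k > 0" using p_pos by auto
      have "\<bar>c2 * (D k n ys)^2 / p$k\<bar> = \<bar>c2\<bar> * (D k n ys)^2 / p$k" using pk by (simp add: abs_mult abs_div)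
      also have "\<dots> \<le> \<bar>c2\<bar> * Hb^2 / p$k"
        using sq_le[OF D_le[OF ys n]] pk by (intro divide_right_mono mult_left_mono) auto
      also have "\<dots> \<le> \<bar>c2\<bar> * Hb^2 / pm"
        using pk pm_pos pm_le[of k] by (intro divide_left_mono) auto
      finally show "\<bar>c2 * (D k n ys)^2 / p$k\<bar> \<le> \<bar>c2\<bar> * Hb^2 / pm" .
    qed
    ultimately show "\<bar>Lf ys - \<Phi> n ys\<bar> \<le> C" unfolding C_def by simp
  qed
  show ?thesis
  proof (rule squeeze_lim[where Y = "\<lambda>n. lsum q n (\<Phi> n)" and E = "\<lambda>n. A * errb n"])
    have "eventually (\<lambda>n. real n * lsum q n (\<Phi> n) = c2 * (\<Sum>k\<in>UNIV. varV p V k / p$k)) sequentially"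
    proof (rule eventually_sequentiallyI[of 1])
      fix n :: nat assume "n \<ge> 1"
      then have n: "n > 0" by simp
      have "lsum q n (\<Phi> n) = (\<Sum>k\<in>UNIV. c2 * (varV p V k / n) / p$k)" unfolding \<Phi>_def
        by (simp add: lsum_sum lsum_cmult lsum_divc M2[OF n])
      then show "real n * lsum q n (\<Phi> n) = c2 * (\<Sum>k\<in>UNIV. varV p V k / p$k)"
        using n by (simp add: sum_distrib_left)
    qed
    then show "(\<lambda>n. real n * lsum q n (\<Phi> n)) \<longlonglongrightarrow> ((deriv ^^ 2) f 1 / 2) * (\<Sum>k\<in>UNIV. varV p V k / p$k)"
      unfolding c2_def[symmetric] by (rule tendsto_eventually)
    show "(\<lambda>n. real n * (A * errb n)) \<longlonglongrightarrow> 0"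
      using tendsto_mult_right_zero[OF errb_lim1, of A] by (simp add: ac_simps)
    show "eventually (\<lambda>n. \<bar>loss_fdiv f Proj p V n - lsum q n (\<Phi> n)\<bar> \<le> A * errb n) sequentially"
    proof (rule eventually_sequentiallyI[of 1])
      fix n :: nat assume "n \<ge> 1"
      then have n: "n > 0" by simp
      show "\<bar>loss_fdiv f Proj p V n - lsum q n (\<Phi> n)\<bar> \<le> A * errb n"
        unfolding loss_fdiv_eq Lf_def[symmetric] by (rule err_bound[OF n A pw[OF n]])
    qed
  qed simp
qed

end


lemma ratio_lim:
  fixes X Y s :: "nat \<Rightarrow> real"
  assumes "(\<lambda>n. s n * X n) \<longlonglongrightarrow> a" "(\<lambda>n. s n * Y n) \<longlonglongrightarrow> b" "b \<noteq> 0"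
    "eventually (\<lambda>n. s n \<noteq> 0) sequentially"
  shows "(\<lambda>n. X n / Y n) \<longlonglongrightarrow> a / b"
proof -
  have "(\<lambda>n. (s n * X n) / (s n * Y n)) \<longlonglongrightarrow> a / b" by (rule tendsto_divide[OF assms(1-3)])
  moreover have "eventually (\<lambda>n. (s n * X n) / (s n * Y n) = X n / Y n) sequentially"
    using assms(4) by eventually_elim simp
  ultimately show ?thesis by (simp add: tendsto_cong)
qed

lemma rs_mult:
  fixes A B :: "real^'k::finite^'k"
  assumes "row_stochastic A" "row_stochastic B"
  shows "row_stochastic (A ** B)"
  unfolding row_stochastic_def
proof (intro conjI allI)
  fix k l
  show "0 \<le> (A ** B)$k$l" using assms unfolding row_stochastic_def matrix_matrix_mult_def
    by (simp add: sum_nonneg)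
next
  fix k
  have "(\<Sum>l\<in>UNIV. (A ** B)$k$l) = (\<Sum>l\<in>UNIV. \<Sum>j\<in>UNIV. A$k$j * B$j$l)"
    by (simp add: matrix_matrix_mult_def)
  also have "\<dots> = (\<Sum>j\<in>UNIV. A$k$j * (\<Sum>l\<in>UNIV. B$j$l))"
    by (subst sum.swap) (simp add: sum_distrib_left)
  also have "\<dots> = 1" using assms unfolding row_stochastic_def by simp
  finally show "(\<Sum>l\<in>UNIV. (A ** B)$k$l) = 1" .
qed

lemma invertible_mat1: "invertible (mat 1 :: real^'k::finite^'k)"
  unfolding invertible_def by (intro exI[of _ "mat 1"]) simp

lemma rs_mat1: "row_stochastic (mat 1 :: real^'k::finite^'k)"
  unfolding row_stochastic_def by (simp add: mat_def sum.delta)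

lemma varV_mat1_pos:
  fixes p :: "real^'k::finite"
  assumes "CARD('k) \<ge> 2" "prob_vec p" "\<forall>k. p$k > 0"
  shows "varV p (mat 1) k > 0"
proof -
  have mi: "matrix_inv (mat 1 :: real^'k^'k) = mat 1"
    by (rule matrix_inv_unique[OF invertible_mat1]) simp
  obtain j where j: "j \<noteq> k"
  proof -
    have "card (UNIV - {k}) = CARD('k) - 1" by (simp add: card_Diff_singleton)
    then have "card (UNIV - {k}) \<noteq> 0" using assms(1) by simp
    then have "UNIV - {k} \<noteq> {}" by (metis card.empty)
    then show ?thesis using that by auto
  qed
  have "p$k + p$j \<le> (\<Sum>l\<in>UNIV. p$l)"
  proof -
    have "(\<Sum>l\<in>{k, j}. p$l) \<le> (\<Sum>l\<in>UNIV. p$l)" using assms(3) by (intro sum_mono2) (auto simp: less_imp_le)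
    then show ?thesis using j by simp
  qed
  moreover have "(\<Sum>l\<in>UNIV. p$l) = 1" using assms(2) unfolding prob_vec_def by simp
  moreover have "p$j > 0" using assms(3) by simp
  ultimately have pk1: "p$k < 1" by linarith
  have "0 < p$k * (1 - p$k)^2" using pk1 assms(3) by simp
  also have "p$k * (1 - p$k)^2 = p$k * (hk p (mat 1) k k)^2" unfolding hk_def mi by (simp add: mat_def)
  also have "\<dots> \<le> (\<Sum>y\<in>UNIV. p$y * (hk p (mat 1) k y)^2)"
    using assms(3) by (intro member_le_sum[where f = "\<lambda>y. p$y * (hk p (mat 1) k y)^2"]) (auto simp: less_imp_le)
  also have "\<dots> = varV p (mat 1) k" by (simp add: varV_def)
  finally show ?thesis .
qed

theorem corollary6:
  fixes p :: "real^'k::finite" and W W' :: "real^'k^'k"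
    and f :: "real \<Rightarrow> real" and Proj :: "real^'k \<Rightarrow> real^'k"
  assumes "CARD('k) \<ge> 2"
    and "prob_vec p" and "\<forall>k. p$k > 0"
    and "row_stochastic W" and "invertible W"
    and "row_stochastic W'" and "invertible W'"
    and "admissible_f f"
    and "valid_proj Proj"
  shows "alpha_fdiv f Proj p (W ** W') \<ge> alpha_fdiv f Proj p W \<and>
         (alpha_fdiv f Proj p (W ** W') = alpha_fdiv f Proj p W \<longleftrightarrow> permutation_matrix W') \<and>
         alpha_mse Proj p (W ** W') \<ge> alpha_mse Proj p W \<and>
         (alpha_mse Proj p (W ** W') = alpha_mse Proj p W \<longleftrightarrow> permutation_matrix W') \<and>
         alpha_tv Proj p (W ** W') \<ge> alpha_tv Proj p W \<and>
         (alpha_tv Proj p (W ** W') = alpha_tv Proj p W \<longleftrightarrow> permutation_matrix W')"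
proof -
  interpret TC: two_chan p W W' using assms by unfold_locales
  have cW: "chan p W Proj" using assms by unfold_locales
  have cWW: "chan p (W ** W') Proj" using assms
    by unfold_locales (auto intro: invertible_mult rs_mult)
  have cI: "chan p (mat 1) Proj" using assms by unfold_locales (auto simp: rs_mat1 invertible_mat1)
  define a where "a k = varV p W k" for k
  define a' where "a' k = varV p (W ** W') k" for k
  define e where "e k = varV p (mat 1) k" for k
  have a': "a' k = TC.D k + a k" for k unfolding a'_def a_def by (rule TC.var_diff)
  have Dnn: "TC.D k \<ge> 0" for k by (rule TC.D_nonneg)
  have perm: "(\<forall>k. TC.D k = 0) \<longleftrightarrow> permutation_matrix W'" by (rule TC.perm_iff)
  have a_nn: "a k \<ge> 0" for k unfolding a_def by (rule chan.var_nonneg[OF cW])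
  have e_pos: "e k > 0" for k unfolding e_def by (rule varV_mat1_pos[OF assms(1-3)])
  have ev: "eventually (\<lambda>n. real n \<noteq> 0) sequentially" by (rule eventually_sequentiallyI[of 1]) auto
  have ev2: "eventually (\<lambda>n. sqrt (real n) \<noteq> 0) sequentially" by (rule eventually_sequentiallyI[of 1]) auto
  define SI where "SI = (\<Sum>k\<in>UNIV. e k)"
  have SI: "SI > 0" unfolding SI_def using e_pos by (intro sum_pos) auto
  have mse: "alpha_mse Proj p V = (\<Sum>k\<in>UNIV. varV p V k) / SI" if "chan p V Proj" for V
  proof -
    have "(\<lambda>n. loss_mse Proj p V n / loss_mse Proj p (mat 1) n) \<longlonglongrightarrow> (\<Sum>k\<in>UNIV. varV p V k) / SI"
      unfolding SI_def e_def using SI SI_def e_def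
      by (intro ratio_lim[OF chan.mse_lim[OF that] chan.mse_lim[OF cI] _ ev]) auto
    then show ?thesis unfolding alpha_mse_def by (rule limI)
  qed
  define c2 where "c2 = (deriv ^^ 2) f 1 / 2"
  have c2: "c2 > 0" using assms(8) unfolding admissible_f_def c2_def by simp
  define FI where "FI = (\<Sum>k\<in>UNIV. e k / p$k)"
  have FI: "FI > 0" unfolding FI_def using e_pos assms(3) by (intro sum_pos) auto
  have fd: "alpha_fdiv f Proj p V = (\<Sum>k\<in>UNIV. varV p V k / p$k) / FI" if "chan p V Proj" for V
  proof -
    have "(\<lambda>n. loss_fdiv f Proj p V n / loss_fdiv f Proj p (mat 1) n) \<longlonglongrightarrow> (c2 * (\<Sum>k\<in>UNIV. varV p V k / p$k)) / (c2 * FI)"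
      using chan.fdiv_lim[OF that assms(8)] chan.fdiv_lim[OF cI assms(8)] c2 FI
      by (intro ratio_lim[OF _ _ _ ev]) (auto simp: c2_def FI_def e_def)
    then show ?thesis unfolding alpha_fdiv_def using c2 by (simp add: limI)
  qed
  define TI where "TI = (\<Sum>k\<in>UNIV. sqrt (e k))"
  have TI: "TI > 0" unfolding TI_def using e_pos by (intro sum_pos) auto
  have cpi: "sqrt (2/pi) > 0" by simp
  have tv: "alpha_tv Proj p V = ((\<Sum>k\<in>UNIV. sqrt (varV p V k)) / TI)^2" if "chan p V Proj" for V
  proof -
    have "(\<lambda>n. loss_tv Proj p V n / loss_tv Proj p (mat 1) n) \<longlonglongrightarrow>
        (sqrt (2/pi) * (\<Sum>k\<in>UNIV. sqrt (varV p V k))) / (sqrt (2/pi) * TI)"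
      using chan.tv_lim[OF that] chan.tv_lim[OF cI] TI cpi
      by (intro ratio_lim[OF _ _ _ ev2]) (auto simp: TI_def e_def)
    then have "(\<lambda>n. (loss_tv Proj p V n / loss_tv Proj p (mat 1) n)^2) \<longlonglongrightarrow>
        ((sqrt (2/pi) * (\<Sum>k\<in>UNIV. sqrt (varV p V k))) / (sqrt (2/pi) * TI))^2"
      by (intro tendsto_power)
    then show ?thesis unfolding alpha_tv_def using cpi by (simp add: limI)
  qed
  have sum_eq_iff: "(\<Sum>k\<in>UNIV. g' k) = (\<Sum>k\<in>UNIV. g k) \<longleftrightarrow> (\<forall>k. g' k = g k)"
    if "\<And>k. g k \<le> g' k" for g g' :: "'k \<Rightarrow> real"
  proof -
    have "(\<Sum>k\<in>UNIV. g' k) = (\<Sum>k\<in>UNIV. g k) \<longleftrightarrow> (\<Sum>k\<in>UNIV. g' k - g k) = 0"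
      by (simp add: sum_subtractf)
    also have "\<dots> \<longleftrightarrow> (\<forall>k. g' k - g k = 0)" using that by (subst sum_nonneg_eq_0_iff) auto
    finally show ?thesis by simp
  qed
  have D0: "(\<forall>k. a' k = a k) \<longleftrightarrow> permutation_matrix W'" using perm a' by simp
  have m1: "(\<Sum>k\<in>UNIV. a k) \<le> (\<Sum>k\<in>UNIV. a' k)" using a' Dnn by (intro sum_mono) (simp add: add_increasing)
  have m2: "(\<Sum>k\<in>UNIV. a' k) = (\<Sum>k\<in>UNIV. a k) \<longleftrightarrow> permutation_matrix W'"
    using sum_eq_iff[of a a'] a' Dnn D0 by (simp add: add_increasing)
  have MSE1: "alpha_mse Proj p (W ** W') \<ge> alpha_mse Proj p W"
    unfolding mse[OF cW] mse[OF cWW] using m1 SI by (simp add: a_def a'_def divide_right_mono)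
  have MSE2: "alpha_mse Proj p (W ** W') = alpha_mse Proj p W \<longleftrightarrow> permutation_matrix W'"
    unfolding mse[OF cW] mse[OF cWW] using m2 SI by (simp add: a_def a'_def)
  have pk: "p$k > 0" for k using assms(3) by simp
  have f1: "a k / p$k \<le> a' k / p$k" for k using a' Dnn pk[of k] by (intro divide_right_mono) (simp_all add: add_increasing less_imp_le)
  have "a' k / p$k = a k / p$k \<longleftrightarrow> a' k = a k" for k using pk[of k] by (simp add: divide_cancel_right)
  then have f2: "(\<forall>k. a' k / p$k = a k / p$k) \<longleftrightarrow> permutation_matrix W'" using D0 by simp
  have FD1: "alpha_fdiv f Proj p (W ** W') \<ge> alpha_fdiv f Proj p W"
    unfolding fd[OF cW] fd[OF cWW] using sum_mono[of UNIV "\<lambda>k. a k / p$k" "\<lambda>k. a' k / p$k", OF f1] FI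
    by (simp add: a_def a'_def divide_right_mono)
  have FD2: "alpha_fdiv f Proj p (W ** W') = alpha_fdiv f Proj p W \<longleftrightarrow> permutation_matrix W'"
    unfolding fd[OF cW] fd[OF cWW] using sum_eq_iff[of "\<lambda>k. a k / p$k" "\<lambda>k. a' k / p$k", OF f1] f2 FI
    by (simp add: a_def a'_def)
  have t1: "sqrt (a k) \<le> sqrt (a' k)" for k using a' Dnn[of k] by simp
  have t2: "(\<forall>k. sqrt (a' k) = sqrt (a k)) \<longleftrightarrow> permutation_matrix W'" using D0 by simp
  define s where "s = (\<Sum>k\<in>UNIV. sqrt (a k))"
  define s' where "s' = (\<Sum>k\<in>UNIV. sqrt (a' k))"
  have s0: "s \<ge> 0" unfolding s_def using a_nn by (intro sum_nonneg) auto
  have ss: "s \<le> s'" unfolding s_def s'_def by (intro sum_mono t1)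
  have ss2: "s' = s \<longleftrightarrow> permutation_matrix W'" unfolding s_def s'_def using sum_eq_iff[of "\<lambda>k. sqrt (a k)" "\<lambda>k. sqrt (a' k)", OF t1] t2 by simp
  have TV1: "alpha_tv Proj p (W ** W') \<ge> alpha_tv Proj p W"
    unfolding tv[OF cW] tv[OF cWW] s_def[symmetric] s'_def[symmetric] a_def[symmetric] a'_def[symmetric]
    using s0 ss TI by (intro power_mono divide_right_mono) auto
  have TV2: "alpha_tv Proj p (W ** W') = alpha_tv Proj p W \<longleftrightarrow> permutation_matrix W'"
  proof -
    have "(s' / TI)^2 = (s / TI)^2 \<longleftrightarrow> s' / TI = s / TI"
      using s0 ss TI by (intro power2_eq_iff_nonneg) auto
    also have "\<dots> \<longleftrightarrow> s' = s" using TI by simp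
    finally show ?thesis
      unfolding tv[OF cW] tv[OF cWW] s_def[symmetric] s'_def[symmetric] a_def[symmetric] a'_def[symmetric]
      using ss2 by simp
  qed
  show ?thesis using MSE1 MSE2 FD1 FD2 TV1 TV2 by blast
qed


end
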